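(* Let $m=2$ and suppose $n>2k+2$ where $0\le k\le n-1$. Let $\mathcal{C}$ be the class of all complete acyclic $k$-bounded binary CP-nets over $n$ variables, over $\mathcal{X}_{swap}$. (1) If $|F^1(x)\cap L|\le n-2-2k$ for every $x\in\mathcal{X}_{swap}$, then $\mathcal{C}$ is learnable with membership queries to a limited oracle. (2) If $|F^1(x)\cap L|\le\lfloor\frac{n-1}{2}\rfloor-k-1$ for every $x\in\mathcal{X}_{swap}$, then $\mathcal{C}$ is learnable with membership queries to a malicious oracle. In either case the worst-case number of queries is in $O(n^2\mathcal{U}_k+e_{N^*}n\log_2(n))$, which is in $O(n^22^k\log_2(n)k^{O(\log_2(k))}+e_{N^*}n\log_2(n))$, where $e_{N^*}$ is the number of edges of the target $N^*$.
   Context: Variables $V=\{v_1,\dots,v_n\}$ with binary domains. An outcome assigns a value to every variable. A complete CP-net gives each $v_i$ a parent set $Pa(v_i)\subseteq V\setminus\{v_i\}$ and, for each assignment $\gamma$ to $Pa(v_i)$, a strict order on $D_{v_i}$; parents are non-dummy. Acyclic: the parent graph (edges $(v_j,v_i)$, $v_j\in Pa(v_i)$) is acyclic; $k$-bounded: all $|Pa(v_i)|\le k$. Improving flip: changing only $v_i$ to the value preferred under the order for context $o[Pa(v_i)]$; $o'\succ o$ iff a nonempty sequence of improving flips leads from $o$ to $o'$. A swap is an ordered pair $x=(x.1,x.2)$ of outcomes differing in exactly one variable $V(x)$; $\mathcal{X}_{swap}$ contains exactly one ordering of each such pair (fixed arbitrarily); the target concept is $c^*(x)=1$ iff $x.1\succ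 x.2$ under the target $N^*$. For $x\in\mathcal{X}_{swap}$, $F^1(x)$ is the set of swaps $x'\in\mathcal{X}_{swap}$ with $V(x')=V(x)$ whose outcomes differ from those of $x$ in exactly one variable other than $V(x)$. A set $L\subseteq\mathcal{X}_{swap}$ is fixed in advance by an adversary, and is unknown to the learner. A limited oracle answers a membership query for $x\notin L$ with $c^*(x)$ and for $x\in L$ with "I don't know"; a malicious oracle answers $c^*(x)$ for $x\notin L$ and $1-c^*(x)$ for $x\in L$; both are persistent (same answer on repeated queries). A class is learnable with membership queries to a limited (malicious) oracle if some algorithm exactly identifies every target in the class using a number of queries polynomial in $n$, the size of the target (its total number of CPT statements), and $|L|$. $\mathcal{U}_k$ is the smallest size of a set $S\subseteq\{0,1\}^{n-1}$ whose projection onto every set of $k$ coordinates contains all $2^k$ vectors. *)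

theory Defs
  imports Complex_Main
begin

text \<open>Variables are v_0,...,v_(n-1) (indices 0..<n); binary domains are bool.
  An outcome over n variables is a bool list of length n.\<close>

definition outcome :: "nat \<Rightarrow> bool list \<Rightarrow> bool" where
  "outcome n o1 \<longleftrightarrow> length o1 = n"

definition is_swap :: "nat \<Rightarrow> bool list \<times> bool list \<Rightarrow> bool" where
  "is_swap n x \<longleftrightarrow> outcome n (fst x) \<and> outcome n (snd x) \<and>
     card {i. i < n \<and> fst x ! i \<noteq> snd x ! i} = 1"

definition swapvar :: "bool list \<times> bool list \<Rightarrow> nat" where
  "swapvar x = (THE i. i < length (fst x) \<and> fst x ! i \<noteq> snd x ! i)"

definition is_Xswap :: "nat \<Rightarrow> (bool list \<times> bool list) set \<Rightarrow> bool" where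
  "is_Xswap n X \<longleftrightarrow> X \<subseteq> {x. is_swap n x} \<and>
     (\<forall>a b. is_swap n (a, b) \<longrightarrow> ((a, b) \<in> X \<longleftrightarrow> (b, a) \<notin> X))"

definition F1 :: "nat \<Rightarrow> (bool list \<times> bool list) set \<Rightarrow> bool list \<times> bool list
                   \<Rightarrow> (bool list \<times> bool list) set" where
  "F1 n X x = {x' \<in> X. swapvar x' = swapvar x \<and>
      card {j. j < n \<and> j \<noteq> swapvar x \<and> fst x' ! j \<noteq> fst x ! j} = 1}"

text \<open>A binary CP-net: parent sets Pa i, and for each variable i the preferred value
  pref i o of v_i in the context given by outcome o (the strict order on the binary
  domain {True,False} is determined by its top element).\<close>
record cpnet =
  Pa :: "nat \<Rightarrow> nat set"
  pref :: "nat \<Rightarrow> bool list \<Rightarrow> bool"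

definition parent_graph :: "nat \<Rightarrow> cpnet \<Rightarrow> (nat \<times> nat) set" where
  "parent_graph n N = {(j, i). i < n \<and> j \<in> Pa N i}"

definition is_cpnet :: "nat \<Rightarrow> nat \<Rightarrow> cpnet \<Rightarrow> bool" where
  "is_cpnet n k N \<longleftrightarrow>
     (\<forall>i<n. Pa N i \<subseteq> {0..<n} - {i} \<and> card (Pa N i) \<le> k) \<and>
     (\<forall>i<n. \<forall>o1 o2. outcome n o1 \<and> outcome n o2 \<and> (\<forall>j\<in>Pa N i. o1 ! j = o2 ! j)
              \<longrightarrow> pref N i o1 = pref N i o2) \<and>
     (\<forall>i<n. \<forall>j\<in>Pa N i. \<exists>o1. outcome n o1 \<and>
              pref N i o1 \<noteq> pref N i (o1[j := \<not> o1 ! j])) \<and>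
     acyclic (parent_graph n N)"

definition flips :: "nat \<Rightarrow> cpnet \<Rightarrow> (bool list \<times> bool list) set" where
  "flips n N = {(o1, o1[i := pref N i o1]) | o1 i. outcome n o1 \<and> i < n \<and> o1 ! i \<noteq> pref N i o1}"

definition better :: "nat \<Rightarrow> cpnet \<Rightarrow> bool list \<Rightarrow> bool list \<Rightarrow> bool" where
  "better n N o' o1 \<longleftrightarrow> (o1, o') \<in> (flips n N)\<^sup>+"

definition concept :: "nat \<Rightarrow> cpnet \<Rightarrow> bool list \<times> bool list \<Rightarrow> bool" where
  "concept n N x \<longleftrightarrow> better n N (fst x) (snd x)"

text \<open>Size = total number of CPT statements; number of edges of the parent graph.\<close>
definition net_size :: "nat \<Rightarrow> cpnet \<Rightarrow> nat" where
  "net_size n N = (\<Sum>i<n. 2 ^ card (Pa N i))"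

definition net_edges :: "nat \<Rightarrow> cpnet \<Rightarrow> nat" where
  "net_edges n N = (\<Sum>i<n. card (Pa N i))"

section \<open>Oracles (persistent: deterministic functions of the query)\<close>

definition limited_oracle :: "nat \<Rightarrow> cpnet \<Rightarrow> (bool list \<times> bool list) set
     \<Rightarrow> bool list \<times> bool list \<Rightarrow> bool option" where
  "limited_oracle n N L x = (if x \<in> L then None else Some (concept n N x))"

definition malicious_oracle :: "nat \<Rightarrow> cpnet \<Rightarrow> (bool list \<times> bool list) set
     \<Rightarrow> bool list \<times> bool list \<Rightarrow> bool option" where
  "malicious_oracle n N L x = Some (if x \<in> L then \<not> concept n N x else concept n N x)"

datatype ('q, 'a, 'r) qtree = Leaf 'r | Ask 'q "'a \<Rightarrow> ('q, 'a, 'r) qtree"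

inductive runs :: "('q \<Rightarrow> 'a) \<Rightarrow> ('q, 'a, 'r) qtree \<Rightarrow> 'r \<Rightarrow> 'q list \<Rightarrow> bool"
  for orc where
  "runs orc (Leaf r) r []"
| "runs orc (f (orc q)) r qs \<Longrightarrow> runs orc (Ask q f) r (q # qs)"

type_synonym learner =
  "(bool list \<times> bool list, bool option, bool list \<times> bool list \<Rightarrow> bool) qtree"

definition k_universal :: "nat \<Rightarrow> nat \<Rightarrow> bool list set \<Rightarrow> bool" where
  "k_universal m k S \<longleftrightarrow> S \<subseteq> {s. length s = m} \<and>
     (\<forall>I. I \<subseteq> {0..<m} \<and> card I = k \<longrightarrow>
        (\<forall>f :: nat \<Rightarrow> bool. \<exists>s\<in>S. \<forall>i\<in>I. s ! i = f i))"

definition U :: "nat \<Rightarrow> nat \<Rightarrow> nat" where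
  "U n k = (LEAST c. \<exists>S. k_universal (n - 1) k S \<and> card S = c)"

text \<open>The algorithm A n k X (knowing n, k and the fixed orientation X of X_swap)
  exactly identifies every target of the class, whatever the unknown L satisfying the
  hypothesis (bound b n k on |F^1(x) \<inter> L|), asks only queries from X, asks a number
  of queries polynomial in n, size and |L| (for each fixed k), and the number of queries
  satisfies the two stated O-bounds (constants uniform in n, k, L, target).\<close>
definition learns_with_bounds ::
  "(nat \<Rightarrow> cpnet \<Rightarrow> (bool list \<times> bool list) set \<Rightarrow> bool list \<times> bool list \<Rightarrow> bool option)
   \<Rightarrow> (nat \<Rightarrow> nat \<Rightarrow> nat) \<Rightarrow> (nat \<Rightarrow> nat \<Rightarrow> (bool list \<times> bool list) set \<Rightarrow> learner) \<Rightarrow> bool" where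
  "learns_with_bounds oracle b A \<longleftrightarrow>
    (\<forall>n k X L N h qs.
       2 * k + 2 < n \<and> is_Xswap n X \<and> L \<subseteq> X \<and> is_cpnet n k N \<and>
       (\<forall>x\<in>X. card (F1 n X x \<inter> L) \<le> b n k) \<and>
       runs (oracle n N L) (A n k X) h qs
       \<longrightarrow> (\<forall>x\<in>X. h x = concept n N x) \<and> set qs \<subseteq> X) \<and>
    (\<forall>k. \<exists>c d::nat. \<forall>n X L N h qs.
       2 * k + 2 < n \<and> is_Xswap n X \<and> L \<subseteq> X \<and> is_cpnet n k N \<and>
       (\<forall>x\<in>X. card (F1 n X x \<inter> L) \<le> b n k) \<and>
       runs (oracle n N L) (A n k X) h qs
       \<longrightarrow> length qs \<le> c * (n + net_size n N + card L) ^ d) \<and>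
    (\<exists>C D :: real. \<forall>n k X L N h qs.
       2 * k + 2 < n \<and> is_Xswap n X \<and> L \<subseteq> X \<and> is_cpnet n k N \<and>
       (\<forall>x\<in>X. card (F1 n X x \<inter> L) \<le> b n k) \<and>
       runs (oracle n N L) (A n k X) h qs
       \<longrightarrow> real (length qs) \<le> C * (real n ^ 2 * real (U n k)
                  + real (net_edges n N) * real n * log 2 (real n)) \<and>
           real (length qs) \<le> C * (real n ^ 2 * 2 ^ k * log 2 (real n)
                  * real (max k 2) powr (D * log 2 (real (max k 2)))
                  + real (net_edges n N) * real n * log 2 (real n)))"

end

theory Submission
  imports Defs "HOL-Library.FuncSet"
begin


lemma cp1: "is_cpnet n k N \<Longrightarrow> \<forall>i<n. Pa N i \<subseteq> {0..<n} - {i} \<and> card (Pa N i) \<le> k"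
  unfolding is_cpnet_def by (rule conjunct1)
lemma cp2: "is_cpnet n k N \<Longrightarrow> \<forall>i<n. \<forall>o1 o2. outcome n o1 \<and> outcome n o2 \<and> (\<forall>j\<in>Pa N i. o1 ! j = o2 ! j)
              \<longrightarrow> pref N i o1 = pref N i o2"
  unfolding is_cpnet_def by (drule conjunct2, rule conjunct1)
lemma cp3: "is_cpnet n k N \<Longrightarrow> \<forall>i<n. \<forall>j\<in>Pa N i. \<exists>o1. outcome n o1 \<and>
              pref N i o1 \<noteq> pref N i (o1[j := \<not> o1 ! j])"
  unfolding is_cpnet_def by (drule conjunct2, drule conjunct2, rule conjunct1)
lemma cp4: "is_cpnet n k N \<Longrightarrow> acyclic (parent_graph n N)"
  unfolding is_cpnet_def by (drule conjunct2, drule conjunct2, rule conjunct2)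

lemma pref_agree:
  assumes "is_cpnet n k N" "i < n" "length a = n" "length b = n" "\<forall>j\<in>Pa N i. a!j = b!j"
  shows "pref N i a = pref N i b"
proof -
  have "\<forall>o1 o2. outcome n o1 \<and> outcome n o2 \<and> (\<forall>j\<in>Pa N i. o1 ! j = o2 ! j)
              \<longrightarrow> pref N i o1 = pref N i o2" using cp2[OF assms(1)] assms(2) by blast
  then show ?thesis using assms(3-5) unfolding outcome_def by blast
qed

lemma Pa_sub: "is_cpnet n k N \<Longrightarrow> i < n \<Longrightarrow> Pa N i \<subseteq> {0..<n} - {i}"
  using cp1 by blast

lemma Pa_card: "is_cpnet n k N \<Longrightarrow> i < n \<Longrightarrow> card (Pa N i) \<le> k"
  using cp1 by blast

lemma Pa_fin: "is_cpnet n k N \<Longrightarrow> i < n \<Longrightarrow> finite (Pa N i)"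
  using Pa_sub[of n k N i] finite_subset[of "Pa N i" "{0..<n} - {i}"] by blast

inductive fpath :: "nat \<Rightarrow> cpnet \<Rightarrow> bool list \<Rightarrow> nat list \<Rightarrow> bool list \<Rightarrow> bool" for n N where
  "fpath n N a [] a"
| "length a = n \<Longrightarrow> v < n \<Longrightarrow> a!v \<noteq> pref N v a \<Longrightarrow> fpath n N (a[v := pref N v a]) vs b
   \<Longrightarrow> fpath n N a (v#vs) b"

lemma flips_fpath:
  assumes "(a, b) \<in> (flips n N)\<^sup>+" shows "\<exists>vs. vs \<noteq> [] \<and> fpath n N a vs b"
  using assms
proof (induction rule: converse_trancl_induct)
  case (base y)
  then obtain i where "length y = n" "i < n" "y!i \<noteq> pref N i y" "b = y[i := pref N i y]"
    unfolding flips_def outcome_def by auto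
  then show ?case using fpath.intros by blast
next
  case (step y z)
  then obtain vs where "vs \<noteq> []" "fpath n N z vs b" by blast
  moreover from step obtain i where "length y = n" "i < n" "y!i \<noteq> pref N i y" "z = y[i := pref N i y]"
    unfolding flips_def outcome_def by auto
  ultimately show ?case using fpath.intros(2) by blast
qed

lemma fpath_len: "fpath n N a vs b \<Longrightarrow> length a = n \<Longrightarrow> length b = n"
  by (induction rule: fpath.induct) auto

lemma fpath_vars: "fpath n N a vs b \<Longrightarrow> set vs \<subseteq> {0..<n}"
  by (induction rule: fpath.induct) auto

context
  fixes n k N v
  assumes cp: "is_cpnet n k N" and vn: "v < n"
begin

lemma L_agree: "fpath n N a vs b \<Longrightarrow> length a = n \<Longrightarrow> (\<forall>u\<in>set vs. u \<notin> Pa N v)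
   \<Longrightarrow> pref N v b = pref N v a"
proof (induction rule: fpath.induct)
  case (1 a) then show ?case by simp
next
  case (2 a w vs b)
  have wP: "w \<notin> Pa N v" using 2 by simp
  have "\<forall>j\<in>Pa N v. a[w := pref N w a] ! j = a ! j"
  proof
    fix j assume "j \<in> Pa N v" with wP have "j \<noteq> w" by blast
    then show "a[w := pref N w a] ! j = a ! j" by simp
  qed
  then have "pref N v (a[w := pref N w a]) = pref N v a"
    using pref_agree[OF cp vn, of "a[w := pref N w a]" a] 2 by simp
  moreover have "\<forall>u\<in>set vs. u \<notin> Pa N v" using 2 by simp
  then have "pref N v b = pref N v (a[w := pref N w a])"
    using 2(5) 2(1) by simp
  ultimately show ?case by simp
qed

lemma L4: "fpath n N a vs b \<Longrightarrow> (\<forall>u\<in>set vs. u \<notin> Pa N v) \<Longrightarrow> a!v = pref N v a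
   \<Longrightarrow> v \<notin> set vs"
proof (induction rule: fpath.induct)
  case (1 a) then show ?case by simp
next
  case (2 a w vs b)
  have wv: "w \<noteq> v" using 2(3) 2(7) by blast
  have wP: "w \<notin> Pa N v" using 2(6) by simp
  have "\<forall>j\<in>Pa N v. a[w := pref N w a] ! j = a ! j"
  proof
    fix j assume "j \<in> Pa N v" with wP have "j \<noteq> w" by blast
    then show "a[w := pref N w a] ! j = a ! j" by simp
  qed
  then have pe: "pref N v (a[w := pref N w a]) = pref N v a"
    using pref_agree[OF cp vn, of "a[w := pref N w a]" a] 2(1) by simp
  have "a[w := pref N w a] ! v = a ! v" using wv by simp
  then have "a[w := pref N w a] ! v = pref N v (a[w := pref N w a])" using pe 2(7) by simp
  moreover have "\<forall>u\<in>set vs. u \<notin> Pa N v" using 2(6) by simp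
  ultimately have "v \<notin> set vs" using 2(5) by blast
  then show ?case using wv by simp
qed

lemma L4_keep: "fpath n N a vs b \<Longrightarrow> (\<forall>u\<in>set vs. u \<notin> Pa N v) \<Longrightarrow> a!v = pref N v a
   \<Longrightarrow> b!v = pref N v a"
proof -
  assume f: "fpath n N a vs b" and r: "\<forall>u\<in>set vs. u \<notin> Pa N v" and e: "a!v = pref N v a"
  have nv: "v \<notin> set vs" using L4[OF f r e] .
  from f r nv e show ?thesis
  proof (induction rule: fpath.induct)
    case (1 a) then show ?case by simp
  next
    case (2 a w vs b)
    have wP: "w \<notin> Pa N v" using 2(6) by simp
    have wv: "w \<noteq> v" using 2(7) by simp
    have "\<forall>j\<in>Pa N v. a[w := pref N w a] ! j = a ! j"
    proof
      fix j assume "j \<in> Pa N v" with wP have "j \<noteq> w" by blast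
      then show "a[w := pref N w a] ! j = a ! j" by simp
    qed
    then have pe: "pref N v (a[w := pref N w a]) = pref N v a"
      using pref_agree[OF cp vn, of "a[w := pref N w a]" a] 2(1) by simp
    have "a[w := pref N w a] ! v = pref N v (a[w := pref N w a])" using wv pe 2(8) by simp
    moreover have "\<forall>u\<in>set vs. u \<notin> Pa N v" "v \<notin> set vs" using 2(6) 2(7) by simp_all
    ultimately have "b ! v = pref N v (a[w := pref N w a])" using 2(5) by blast
    then show ?case using pe by simp
  qed
qed

lemma L3: "fpath n N a vs b \<Longrightarrow> (\<forall>u\<in>set vs. u \<notin> Pa N v) \<Longrightarrow> v \<in> set vs
   \<Longrightarrow> b!v = pref N v a"
proof (induction rule: fpath.induct)
  case (1 a) then show ?case by simp
next
  case (2 a w vs b)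
  have wP: "w \<notin> Pa N v" using 2(6) by simp
  have "\<forall>j\<in>Pa N v. a[w := pref N w a] ! j = a ! j"
  proof
    fix j assume "j \<in> Pa N v" with wP have "j \<noteq> w" by blast
    then show "a[w := pref N w a] ! j = a ! j" by simp
  qed
  then have pe: "pref N v (a[w := pref N w a]) = pref N v a"
    using pref_agree[OF cp vn, of "a[w := pref N w a]" a] 2(1) by simp
  have rest: "\<forall>u\<in>set vs. u \<notin> Pa N v" using 2(6) by simp
  show ?case
  proof (cases "v \<in> set vs")
    case True
    then have "b ! v = pref N v (a[w := pref N w a])" using 2(5) rest by blast
    then show ?thesis using pe by simp
  next
    case False
    then have wv: "w = v" using 2(7) by simp
    have "a[w := pref N w a] ! v = pref N v a" using wv 2(1) 2(2) by simp
    then have "a[w := pref N w a] ! v = pref N v (a[w := pref N w a])" using pe by simp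
    then have "b ! v = pref N v (a[w := pref N w a])" using L4_keep[OF 2(4) rest] by blast
    then show ?thesis using pe by simp
  qed
qed

end

lemma flips_irrefl:
  assumes cp: "is_cpnet n k N" and len: "length a = n"
  shows "(a, a) \<notin> (flips n N)\<^sup>+"
proof
  assume "(a, a) \<in> (flips n N)\<^sup>+"
  then obtain vs where ne: "vs \<noteq> []" and fp: "fpath n N a vs a" using flips_fpath by blast
  define r where "r = parent_graph n N"
  have fin: "finite r"
  proof -
    have "r \<subseteq> {0..<n} \<times> {0..<n}"
      using Pa_sub[OF cp] unfolding r_def parent_graph_def by fastforce
    then show ?thesis by (rule finite_subset) auto
  qed
  have acy: "acyclic r" using cp4[OF cp] unfolding r_def .
  have wf: "wf (r\<^sup>+)" using finite_acyclic_wf[OF fin acy] wf_trancl by blast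
  have h: "hd vs \<in> set vs" using ne by simp
  obtain v where v: "v \<in> set vs" and vmin0: "\<And>u. (u, v) \<in> r\<^sup>+ \<Longrightarrow> u \<notin> set vs"
    using wfE_min[OF wf h] by blast
  have vmin: "\<forall>u. (u, v) \<in> r\<^sup>+ \<longrightarrow> u \<notin> set vs" using vmin0 by blast
  have vn: "v < n" using fpath_vars[OF fp] v by auto
  have noPa: "\<forall>u\<in>set vs. u \<notin> Pa N v"
  proof (intro ballI notI)
    fix u assume "u \<in> set vs" "u \<in> Pa N v"
    then have "(u, v) \<in> r" unfolding r_def parent_graph_def using vn by auto
    then show False using vmin \<open>u \<in> set vs\<close> by blast
  qed
  have "a!v = pref N v a" using L3[OF cp vn fp noPa v] .
  then have "v \<notin> set vs" using L4[OF cp vn fp noPa] by blast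
  with v show False by blast
qed


lemma swapvar_eq:
  assumes "length a = length b" "i < length a" "a!i \<noteq> b!i" "\<forall>j<length a. j \<noteq> i \<longrightarrow> a!j = b!j"
  shows "swapvar (a, b) = i"
  unfolding swapvar_def
  by (rule the_equality) (use assms in auto)

lemma Xswap_facts:
  assumes X: "is_Xswap n X" and x: "x \<in> X"
  shows "swapvar x < n" "length (fst x) = n" "length (snd x) = n"
        "snd x = (fst x)[swapvar x := \<not> fst x ! swapvar x]"
proof -
  have sw: "is_swap n x" using X x unfolding is_Xswap_def by blast
  then have l1: "length (fst x) = n" and l2: "length (snd x) = n"
    and c: "card {i. i < n \<and> fst x ! i \<noteq> snd x ! i} = 1"
    unfolding is_swap_def outcome_def by auto
  from c obtain i where iset: "{i. i < n \<and> fst x ! i \<noteq> snd x ! i} = {i}" by (rule card_1_singletonE)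
  then have i: "i < n" "fst x ! i \<noteq> snd x ! i" by auto
  have oth: "\<forall>j<n. j \<noteq> i \<longrightarrow> fst x ! j = snd x ! j" using iset by blast
  have sv: "swapvar x = i"
    using swapvar_eq[of "fst x" "snd x" i] l1 l2 i oth by (cases x) auto
  show "swapvar x < n" using sv i by simp
  show "length (fst x) = n" "length (snd x) = n" by (fact l1, fact l2)
  show "snd x = (fst x)[swapvar x := \<not> fst x ! swapvar x]"
  proof (rule nth_equalityI)
    show "length (snd x) = length ((fst x)[swapvar x := \<not> fst x ! swapvar x])" using l1 l2 by simp
  next
    fix j assume "j < length (snd x)"
    then show "snd x ! j = (fst x)[swapvar x := \<not> fst x ! swapvar x] ! j"
      using sv oth i l1 l2 by (cases "j = i") auto
  qed
qed

lemma pref_upd_self: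
  assumes cp: "is_cpnet n k N" and i: "i < n" and l: "length a = n"
  shows "pref N i (a[i := c]) = pref N i a"
proof -
  have "i \<notin> Pa N i" using Pa_sub[OF cp i] by blast
  then have "\<forall>j\<in>Pa N i. a[i := c] ! j = a ! j"
  proof (intro ballI)
    fix j assume "i \<notin> Pa N i" "j \<in> Pa N i"
    then have "j \<noteq> i" by blast
    then show "a[i := c] ! j = a ! j" by simp
  qed
  then show ?thesis using pref_agree[OF cp i, of "a[i := c]" a] l by simp
qed

lemma concept_swap:
  assumes cp: "is_cpnet n k N" and l: "length a = n" and i: "i < n"
  shows "concept n N (a, a[i := \<not> a!i]) \<longleftrightarrow> a!i = pref N i a"
proof
  let ?b = "a[i := \<not> a!i]"
  have pb: "pref N i ?b = pref N i a" using pref_upd_self[OF cp i l] .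
  assume c: "concept n N (a, ?b)"
  show "a!i = pref N i a"
  proof (rule ccontr)
    assume ne: "a!i \<noteq> pref N i a"
    have "(a, a[i := pref N i a]) \<in> flips n N"
      unfolding flips_def outcome_def using l i ne by blast
    moreover have "a[i := pref N i a] = ?b" using ne by (cases "a!i") auto
    ultimately have "(a, ?b) \<in> flips n N" by simp
    moreover have "(?b, a) \<in> (flips n N)\<^sup>+" using c unfolding concept_def better_def by simp
    ultimately have "(a, a) \<in> (flips n N)\<^sup>+" by simp
    then show False using flips_irrefl[OF cp l] by blast
  qed
next
  let ?b = "a[i := \<not> a!i]"
  have pb: "pref N i ?b = pref N i a" using pref_upd_self[OF cp i l] .
  assume e: "a!i = pref N i a"
  have lb: "length ?b = n" using l by simp
  have "?b ! i \<noteq> pref N i ?b" using pb e i l by simp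
  then have "(?b, ?b[i := pref N i ?b]) \<in> flips n N"
    unfolding flips_def outcome_def using lb i by blast
  moreover have "?b[i := pref N i ?b] = a" using pb e[symmetric] by simp
  ultimately have "(?b, a) \<in> (flips n N)\<^sup>+" by auto
  then show "concept n N (a, ?b)" unfolding concept_def better_def by simp
qed

lemma concept_X:
  assumes cp: "is_cpnet n k N" and X: "is_Xswap n X" and x: "x \<in> X"
  shows "concept n N x \<longleftrightarrow> fst x ! swapvar x = pref N (swapvar x) (fst x)"
proof -
  note f = Xswap_facts[OF X x]
  have "x = (fst x, (fst x)[swapvar x := \<not> fst x ! swapvar x])" using f(4) by (cases x) simp
  then have "concept n N x = concept n N (fst x, (fst x)[swapvar x := \<not> fst x ! swapvar x])" by simp
  also have "\<dots> = (fst x ! swapvar x = pref N (swapvar x) (fst x))"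
    using concept_swap[OF cp f(2) f(1)] .
  finally show ?thesis .
qed

definition sw :: "(bool list \<times> bool list) set \<Rightarrow> nat \<Rightarrow> bool list \<Rightarrow> bool list \<times> bool list" where
  "sw X i a = (if (a[i := True], a[i := False]) \<in> X then (a[i := True], a[i := False])
               else (a[i := False], a[i := True]))"

lemma sw_form: "\<exists>c. sw X i a = (a[i := c], a[i := \<not> c])"
  unfolding sw_def by (cases "(a[i := True], a[i := False]) \<in> X") auto

lemma sw_in:
  assumes X: "is_Xswap n X" and l: "length a = n" and i: "i < n"
  shows "sw X i a \<in> X"
proof -
  have "{j. j < n \<and> a[i := True] ! j \<noteq> a[i := False] ! j} = {i}" using l i
    by (auto simp: nth_list_update)
  then have "is_swap n (a[i := True], a[i := False])" unfolding is_swap_def outcome_def using l by simp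
  then have "(a[i := True], a[i := False]) \<in> X \<longleftrightarrow> (a[i := False], a[i := True]) \<notin> X"
    using X unfolding is_Xswap_def by blast
  then show ?thesis unfolding sw_def by auto
qed

lemma sw_var:
  assumes l: "length a = n" and i: "i < n"
  shows "swapvar (sw X i a) = i"
proof -
  obtain c where c: "sw X i a = (a[i := c], a[i := \<not> c])" using sw_form by blast
  show ?thesis unfolding c by (rule swapvar_eq) (use l i in \<open>auto simp: nth_list_update\<close>)
qed

lemma sw_concept:
  assumes cp: "is_cpnet n k N" and X: "is_Xswap n X" and l: "length a = n" and i: "i < n"
  shows "concept n N (sw X i a) \<longleftrightarrow> fst (sw X i a) ! i = pref N i a"
proof -
  obtain c where c: "sw X i a = (a[i := c], a[i := \<not> c])" using sw_form by blast
  have "concept n N (sw X i a) \<longleftrightarrow> fst (sw X i a) ! i = pref N i (fst (sw X i a))"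
    using concept_X[OF cp X sw_in[OF X l i]] sw_var[OF l i] by simp
  moreover have "pref N i (fst (sw X i a)) = pref N i a" using c pref_upd_self[OF cp i l] by simp
  ultimately show ?thesis by simp
qed


primrec exec :: "('q \<Rightarrow> 'a) \<Rightarrow> ('q, 'a, 'r) qtree \<Rightarrow> 'r \<times> 'q list" where
  "exec orc (Leaf r) = (r, [])"
| "exec orc (Ask q f) = (fst (exec orc (f (orc q))), q # snd (exec orc (f (orc q))))"

lemma runs_exec: "runs orc t r qs \<Longrightarrow> exec orc t = (r, qs)"
  by (induction rule: runs.induct) auto

primrec bindT :: "('q, 'a, 'r) qtree \<Rightarrow> ('r \<Rightarrow> ('q, 'a, 's) qtree) \<Rightarrow> ('q, 'a, 's) qtree" where
  "bindT (Leaf r) g = g r"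
| "bindT (Ask q f) g = Ask q (\<lambda>a. bindT (f a) g)"

lemma exec_bind: "exec orc (bindT t g) =
   (fst (exec orc (g (fst (exec orc t)))), snd (exec orc t) @ snd (exec orc (g (fst (exec orc t)))))"
  by (induction t) auto

fun seqT :: "('q, 'a, 'r) qtree list \<Rightarrow> ('q, 'a, 'r list) qtree" where
  "seqT [] = Leaf []"
| "seqT (t # ts) = bindT t (\<lambda>r. bindT (seqT ts) (\<lambda>rs. Leaf (r # rs)))"

lemma exec_seqT: "exec orc (seqT ts) =
   (map (\<lambda>t. fst (exec orc t)) ts, concat (map (\<lambda>t. snd (exec orc t)) ts))"
  by (induction ts) (auto simp: exec_bind)

definition others :: "nat \<Rightarrow> nat \<Rightarrow> nat list" where
  "others n i = filter (\<lambda>j. j \<noteq> i) [0..<n]"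

lemma others_set: "set (others n i) = {0..<n} - {i}" unfolding others_def by auto
lemma others_dist: "distinct (others n i)" unfolding others_def by simp
lemma others_len: "i < n \<Longrightarrow> length (others n i) = n - 1"
  using distinct_card[OF others_dist, of n i] others_set[of n i] by simp

definition nb :: "(bool list \<times> bool list) set \<Rightarrow> nat \<Rightarrow> bool list \<Rightarrow> nat \<Rightarrow> bool list \<times> bool list" where
  "nb X i a j = sw X i (a[j := \<not> a ! j])"

definition dec :: "nat \<Rightarrow> bool list \<times> bool list \<Rightarrow> bool option \<Rightarrow> bool option" where
  "dec i q r = (case r of None \<Rightarrow> None | Some b \<Rightarrow> Some (b = (fst q ! i)))"

definition vote :: "(bool list \<times> bool list) set \<Rightarrow> nat \<Rightarrow> nat \<Rightarrow> bool list
     \<Rightarrow> (bool list \<times> bool list, bool option, bool) qtree" where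
  "vote X n i a = (let qs = map (nb X i a) (others n i) in
     bindT (seqT (map (\<lambda>q. Ask q Leaf) qs))
       (\<lambda>as. Leaf (length (filter (\<lambda>d. d = Some False) (map2 (dec i) qs as))
                  < length (filter (\<lambda>d. d = Some True) (map2 (dec i) qs as)))))"

definition dv :: "(bool list \<times> bool list \<Rightarrow> bool option) \<Rightarrow> (bool list \<times> bool list) set
    \<Rightarrow> nat \<Rightarrow> bool list \<Rightarrow> nat \<Rightarrow> bool option" where
  "dv orc X i a j = dec i (nb X i a j) (orc (nb X i a j))"

definition good :: "(bool list \<times> bool list \<Rightarrow> bool option) \<Rightarrow> (bool list \<times> bool list) set
    \<Rightarrow> nat \<Rightarrow> cpnet \<Rightarrow> bool" where
  "good orc X n N \<longleftrightarrow> (\<forall>i<n. \<forall>a. length a = n \<longrightarrow>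
     card {j \<in> {0..<n} - {i}. dv orc X i a j = Some (\<not> pref N i a)}
     < card {j \<in> {0..<n} - {i}. dv orc X i a j = Some (pref N i a)})"

lemma len_filter_card: "distinct xs \<Longrightarrow> length (filter P xs) = card {x \<in> set xs. P x}"
  by (simp add: distinct_length_filter Int_def conj_commute)

lemma exec_vote:
  assumes g: "good orc X n N" and i: "i < n" and l: "length a = n"
  shows "exec orc (vote X n i a) = (pref N i a, map (nb X i a) (others n i))"
proof -
  let ?qs = "map (nb X i a) (others n i)"
  have e1: "exec orc (seqT (map (\<lambda>q. Ask q Leaf) ?qs)) = (map orc ?qs, ?qs)"
    by (simp add: exec_seqT comp_def)
  have m: "map2 (dec i) ?qs (map orc ?qs) = map (dv orc X i a) (others n i)"
    by (simp add: dv_def zip_map_map comp_def map_zip_map2 zip_same_conv_map)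
  have c: "\<And>v. length (filter (\<lambda>d. d = Some v) (map (dv orc X i a) (others n i)))
      = card {j \<in> {0..<n} - {i}. dv orc X i a j = Some v}"
    by (simp add: len_filter_card[OF others_dist] others_set comp_def)
  have gi: "card {j \<in> {0..<n} - {i}. dv orc X i a j = Some (\<not> pref N i a)}
     < card {j \<in> {0..<n} - {i}. dv orc X i a j = Some (pref N i a)}"
    using g i l unfolding good_def by blast
  have "(card {j \<in> {0..<n} - {i}. dv orc X i a j = Some False}
        < card {j \<in> {0..<n} - {i}. dv orc X i a j = Some True}) = pref N i a"
  proof (cases "pref N i a")
    case True then show ?thesis using gi by simp
  next
    case False then show ?thesis using gi by simp
  qed
  then show ?thesis unfolding vote_def Let_def exec_bind e1 using m c by simp
qed

lemma nb_in: "is_Xswap n X \<Longrightarrow> length a = n \<Longrightarrow> i < n \<Longrightarrow> j < n \<Longrightarrow> nb X i a j \<in> X"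
  unfolding nb_def by (rule sw_in) auto

lemma vote_qs:
  assumes X: "is_Xswap n X" and i: "i < n" and l: "length a = n"
  shows "set (map (nb X i a) (others n i)) \<subseteq> X" "length (map (nb X i a) (others n i)) = n - 1"
  using nb_in[OF X l i] others_set[of n i] others_len[OF i] by auto


lemma fst_sw_nth: "j \<noteq> i \<Longrightarrow> fst (sw X i a) ! j = a ! j"
  using sw_form[of X i a] by auto

lemma finite_X: "is_Xswap n X \<Longrightarrow> finite X"
proof -
  assume X: "is_Xswap n X"
  have "X \<subseteq> {xs. length xs = n} \<times> {xs. length xs = n}"
    using X unfolding is_Xswap_def is_swap_def outcome_def by auto
  moreover have f: "finite {xs::bool list. length xs = n}"
    using finite_lists_length_eq[OF finite_UNIV, of n] by simp
  have "finite ({xs::bool list. length xs = n} \<times> {xs::bool list. length xs = n})"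
    by (rule finite_cartesian_product[OF f f])
  ultimately show ?thesis using finite_subset by metis
qed

context
  fixes n k N X L
  assumes cp: "is_cpnet n k N" and X: "is_Xswap n X" and LX: "L \<subseteq> X"
begin

lemma nb_F1:
  assumes i: "i < n" and l: "length a = n" and j: "j \<in> {0..<n} - {i}"
  shows "nb X i a j \<in> F1 n X (sw X i a)"
proof -
  have l': "length (a[j := \<not> a ! j]) = n" using l by simp
  have v1: "swapvar (nb X i a j) = i" unfolding nb_def using sw_var[OF l' i] .
  have v2: "swapvar (sw X i a) = i" using sw_var[OF l i] .
  have "{j'. j' < n \<and> j' \<noteq> swapvar (sw X i a) \<and> fst (nb X i a j) ! j' \<noteq> fst (sw X i a) ! j'} = {j}"
  proof -
    have "\<And>j'. j' \<noteq> i \<Longrightarrow> fst (nb X i a j) ! j' \<noteq> fst (sw X i a) ! j' \<longleftrightarrow> j' = j"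
      unfolding nb_def using fst_sw_nth l j by (auto simp: nth_list_update)
    then show ?thesis using v2 j by auto
  qed
  then show ?thesis unfolding F1_def using nb_in[OF X l i] j v1 v2 by simp
qed

lemma nb_inj:
  assumes l: "length a = n"
  shows "inj_on (nb X i a) ({0..<n} - {i})"
proof (rule inj_onI)
  fix j1 j2 assume j1: "j1 \<in> {0..<n} - {i}" and j2: "j2 \<in> {0..<n} - {i}" and e: "nb X i a j1 = nb X i a j2"
  show "j1 = j2"
  proof (rule ccontr)
    assume ne: "j1 \<noteq> j2"
    have "fst (nb X i a j1) ! j1 = (\<not> a ! j1)" unfolding nb_def using fst_sw_nth j1 l by simp
    moreover have "fst (nb X i a j2) ! j1 = a ! j1" unfolding nb_def using fst_sw_nth j1 ne by simp
    ultimately show False using e by simp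
  qed
qed

lemma LL_card:
  assumes i: "i < n" and l: "length a = n" and bd: "\<forall>x\<in>X. card (F1 n X x \<inter> L) \<le> b"
  shows "card {j \<in> {0..<n} - {i}. nb X i a j \<in> L} \<le> b"
proof -
  let ?LL = "{j \<in> {0..<n} - {i}. nb X i a j \<in> L}"
  have inj: "inj_on (nb X i a) ?LL" using nb_inj[OF l, of i] by (rule inj_on_subset) auto
  have "card ?LL = card (nb X i a ` ?LL)" using card_image[OF inj] by simp
  also have "\<dots> \<le> card (F1 n X (sw X i a) \<inter> L)"
  proof (rule card_mono)
    show "finite (F1 n X (sw X i a) \<inter> L)"
      using finite_X[OF X] unfolding F1_def by auto
    show "nb X i a ` ?LL \<subseteq> F1 n X (sw X i a) \<inter> L" using nb_F1[OF i l] by auto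
  qed
  also have "\<dots> \<le> b" using bd sw_in[OF X l i] by blast
  finally show ?thesis .
qed

lemma nb_concept:
  assumes i: "i < n" and l: "length a = n" and j: "j \<in> {0..<n} - {i}"
  shows "concept n N (nb X i a j) \<longleftrightarrow> fst (nb X i a j) ! i = pref N i (a[j := \<not> a ! j])"
  unfolding nb_def by (rule sw_concept[OF cp X]) (use l i in auto)

lemma pref_flip:
  assumes i: "i < n" and l: "length a = n" and jP: "j \<notin> Pa N i"
  shows "pref N i (a[j := \<not> a ! j]) = pref N i a"
proof -
  have "\<forall>j'\<in>Pa N i. a[j := \<not> a ! j] ! j' = a ! j'"
  proof
    fix j' assume "j' \<in> Pa N i" with jP have "j' \<noteq> j" by blast
    then show "a[j := \<not> a ! j] ! j' = a ! j'" by simp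
  qed
  then show ?thesis using pref_agree[OF cp i, of "a[j := \<not> a ! j]" a] l by simp
qed

lemma dec_true: "dec i q (Some (fst q ! i = p)) = Some p" unfolding dec_def by auto
lemma dec_false: "dec i q (Some (\<not> (fst q ! i = p))) = Some (\<not> p)" unfolding dec_def by auto

lemma card_diff2:
  assumes "finite A" "finite B" "finite C"
  shows "card A - card B - card C \<le> card (A - B - C)"
  by (metis assms diff_card_le_card_Diff diff_le_mono finite_Diff le_trans)

lemma good_limited:
  assumes n: "2 * k + 2 < n" and bd: "\<forall>x\<in>X. card (F1 n X x \<inter> L) \<le> n - 2 - 2 * k"
  shows "good (limited_oracle n N L) X n N"
  unfolding good_def
proof (intro allI impI)
  fix i and a :: "bool list" assume i: "i < n" and l: "length a = n"
  let ?A = "{0..<n} - {i}"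
  let ?p = "pref N i a"
  let ?o = "limited_oracle n N L"
  let ?LL = "{j \<in> ?A. nb X i a j \<in> L}"
  have W: "{j \<in> ?A. dv ?o X i a j = Some (\<not> ?p)} \<subseteq> Pa N i"
  proof
    fix j assume jj: "j \<in> {j \<in> ?A. dv ?o X i a j = Some (\<not> ?p)}"
    show "j \<in> Pa N i"
    proof (rule ccontr)
      assume jP: "j \<notin> Pa N i"
      have jA: "j \<in> ?A" using jj by blast
      show False
      proof (cases "nb X i a j \<in> L")
        case True
        then have "dv ?o X i a j = None" unfolding dv_def limited_oracle_def dec_def by simp
        then show False using jj by simp
      next
        case False
        then have "dv ?o X i a j = Some ?p"
          unfolding dv_def limited_oracle_def
          using nb_concept[OF i l jA] pref_flip[OF i l jP] dec_true by simp
        then show False using jj by simp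
      qed
    qed
  qed
  have R: "?A - Pa N i - ?LL \<subseteq> {j \<in> ?A. dv ?o X i a j = Some ?p}"
  proof
    fix j assume jj: "j \<in> ?A - Pa N i - ?LL"
    then have jA: "j \<in> ?A" and jP: "j \<notin> Pa N i" and jL: "nb X i a j \<notin> L" by auto
    have "dv ?o X i a j = Some ?p"
      unfolding dv_def limited_oracle_def
      using jL nb_concept[OF i l jA] pref_flip[OF i l jP] dec_true by simp
    then show "j \<in> {j \<in> ?A. dv ?o X i a j = Some ?p}" using jA by blast
  qed
  have fP: "finite (Pa N i)" using Pa_fin[OF cp i] .
  have c1: "card {j \<in> ?A. dv ?o X i a j = Some (\<not> ?p)} \<le> k"
    using card_mono[OF fP W] Pa_card[OF cp i] by simp
  have cA: "card ?A = n - 1" using i by simp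
  have cL: "card ?LL \<le> n - 2 - 2 * k" using LL_card[OF i l bd] .
  have "card ?A - card (Pa N i) - card ?LL \<le> card (?A - Pa N i - ?LL)"
    by (rule card_diff2) (use fP in auto)
  also have "\<dots> \<le> card {j \<in> ?A. dv ?o X i a j = Some ?p}"
    by (rule card_mono[OF _ R]) auto
  finally have c2: "card ?A - card (Pa N i) - card ?LL \<le> card {j \<in> ?A. dv ?o X i a j = Some ?p}" .
  have "k < card ?A - card (Pa N i) - card ?LL"
    using cA cL Pa_card[OF cp i] n by linarith
  then show "card {j \<in> ?A. dv ?o X i a j = Some (\<not> ?p)} < card {j \<in> ?A. dv ?o X i a j = Some ?p}"
    using c1 c2 by linarith
qed

lemma good_malicious:
  assumes n: "2 * k + 2 < n" and bd: "\<forall>x\<in>X. card (F1 n X x \<inter> L) \<le> (n - 1) div 2 - k - 1"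
  shows "good (malicious_oracle n N L) X n N"
  unfolding good_def
proof (intro allI impI)
  fix i and a :: "bool list" assume i: "i < n" and l: "length a = n"
  let ?A = "{0..<n} - {i}"
  let ?p = "pref N i a"
  let ?o = "malicious_oracle n N L"
  let ?LL = "{j \<in> ?A. nb X i a j \<in> L}"
  have W: "{j \<in> ?A. dv ?o X i a j = Some (\<not> ?p)} \<subseteq> Pa N i \<union> ?LL"
  proof
    fix j assume jj: "j \<in> {j \<in> ?A. dv ?o X i a j = Some (\<not> ?p)}"
    show "j \<in> Pa N i \<union> ?LL"
    proof (rule ccontr)
      assume jP: "j \<notin> Pa N i \<union> ?LL"
      have jA: "j \<in> ?A" using jj by blast
      have jP': "j \<notin> Pa N i" and jL: "nb X i a j \<notin> L" using jP jA by auto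
      have "dv ?o X i a j = Some ?p"
        unfolding dv_def malicious_oracle_def
        using jL nb_concept[OF i l jA] pref_flip[OF i l jP'] dec_true by simp
      then show False using jj by simp
    qed
  qed
  have R: "?A - Pa N i - ?LL \<subseteq> {j \<in> ?A. dv ?o X i a j = Some ?p}"
  proof
    fix j assume jj: "j \<in> ?A - Pa N i - ?LL"
    then have jA: "j \<in> ?A" and jP: "j \<notin> Pa N i" and jL: "nb X i a j \<notin> L" by auto
    have "dv ?o X i a j = Some ?p"
      unfolding dv_def malicious_oracle_def
      using jL nb_concept[OF i l jA] pref_flip[OF i l jP] dec_true by simp
    then show "j \<in> {j \<in> ?A. dv ?o X i a j = Some ?p}" using jA by blast
  qed
  have fP: "finite (Pa N i)" using Pa_fin[OF cp i] .
  have cL: "card ?LL \<le> (n - 1) div 2 - k - 1" using LL_card[OF i l bd] .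
  have fU: "finite (Pa N i \<union> ?LL)" using fP by auto
  have "card {j \<in> ?A. dv ?o X i a j = Some (\<not> ?p)} \<le> card (Pa N i \<union> ?LL)"
    by (rule card_mono[OF fU W])
  also have "\<dots> \<le> card (Pa N i) + card ?LL" by (rule card_Un_le)
  finally have c1: "card {j \<in> ?A. dv ?o X i a j = Some (\<not> ?p)} \<le> card (Pa N i) + card ?LL" .
  have cA: "card ?A = n - 1" using i by simp
  have "card ?A - card (Pa N i) - card ?LL \<le> card (?A - Pa N i - ?LL)"
    by (rule card_diff2) (use fP in auto)
  also have "\<dots> \<le> card {j \<in> ?A. dv ?o X i a j = Some ?p}"
    by (rule card_mono[OF _ R]) auto
  finally have c2: "card ?A - card (Pa N i) - card ?LL \<le> card {j \<in> ?A. dv ?o X i a j = Some ?p}" .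
  have pk: "card (Pa N i) \<le> k" using Pa_card[OF cp i] .
  have "card (Pa N i) + card ?LL < card ?A - card (Pa N i) - card ?LL"
    using cA cL pk n by (simp add: cA)
  then show "card {j \<in> ?A. dv ?o X i a j = Some (\<not> ?p)} < card {j \<in> ?A. dv ?o X i a j = Some ?p}"
    using c1 c2 by linarith
qed

end


definition outc :: "nat \<Rightarrow> bool list \<Rightarrow> bool list" where
  "outc i s = take i s @ False # drop i s"

lemma outc_len: "length s = n - 1 \<Longrightarrow> i < n \<Longrightarrow> length (outc i s) = n"
  unfolding outc_def by simp

lemma outc_nth:
  assumes "length s = n - 1" "i < n" "j < n" "j \<noteq> i"
  shows "outc i s ! j = s ! (if j < i then j else j - 1)"
proof (cases "j < i")
  case True
  then show ?thesis using assms unfolding outc_def by (simp add: nth_append)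
next
  case False
  then have "j > i" using assms by simp
  then obtain d where d: "j = Suc (i + d)" by (metis less_iff_Suc_add)
  have "outc i s ! j = (False # drop i s) ! (Suc d)"
    unfolding outc_def using assms d by (simp add: nth_append)
  also have "\<dots> = s ! (i + d)" using assms d by simp
  finally show ?thesis using d False by simp
qed

lemma univ_out:
  assumes U: "k_universal (n - 1) k S" and i: "i < n" and kn: "k \<le> n - 1"
    and B: "B \<subseteq> {0..<n} - {i}" and cB: "card B \<le> k"
  shows "\<exists>s\<in>S. \<forall>j\<in>B. outc i s ! j = g j"
proof -
  define dn where "dn = (\<lambda>j::nat. if j < i then j else j - 1)"
  define up where "up = (\<lambda>j::nat. if j < i then j else j + 1)"
  have upd: "\<And>j. j \<in> B \<Longrightarrow> up (dn j) = j" using B unfolding up_def dn_def by auto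
  have inj: "inj_on dn B" by (rule inj_on_inverseI[where g = up]) (use upd in blast)
  let ?J = "dn ` B"
  have I0s: "?J \<subseteq> {0..<n-1}" using B i unfolding dn_def by auto
  have fB: "finite B" using B finite_subset by blast
  have cI0: "card ?J = card B" using card_image[OF inj] .
  have "k - card ?J \<le> card ({0..<n-1} - ?J)"
    using card_Diff_subset[OF finite_imageI[OF fB] I0s] cI0 kn by simp
  then obtain C where C: "C \<subseteq> {0..<n-1} - ?J" "card C = k - card ?J" "finite C"
    by (rule obtain_subset_with_card_n)
  let ?I = "?J \<union> C"
  have Isub: "?I \<subseteq> {0..<n-1}" using I0s C by auto
  have "card ?I = card ?J + card C"
    by (rule card_Un_disjoint) (use C fB in auto)
  then have cI: "card ?I = k" using C(2) cI0 cB by simp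
  have Uall: "\<forall>I. I \<subseteq> {0..<n-1} \<and> card I = k \<longrightarrow> (\<forall>f :: nat \<Rightarrow> bool. \<exists>s\<in>S. \<forall>i\<in>I. s ! i = f i)"
    using U unfolding k_universal_def by (rule conjunct2)
  have "\<forall>f :: nat \<Rightarrow> bool. \<exists>s\<in>S. \<forall>i\<in>?I. s ! i = f i" using Uall Isub cI by blast
  then obtain s where s: "s \<in> S" and sI: "\<forall>j'\<in>?I. s ! j' = g (up j')"
    by (rule allE[where x = "\<lambda>j'. g (up j')"]) blast
  have ls: "length s = n - 1" using U s unfolding k_universal_def by auto
  have "\<forall>j\<in>B. outc i s ! j = g j"
  proof
    fix j assume j: "j \<in> B"
    then have jn: "j < n" "j \<noteq> i" using B by auto
    have "outc i s ! j = s ! (dn j)" using outc_nth[OF ls i jn] unfolding dn_def by simp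
    also have "\<dots> = g (up (dn j))" using sI j by blast
    also have "\<dots> = g j" using upd j by simp
    finally show "outc i s ! j = g j" .
  qed
  then show ?thesis using s by blast
qed

definition mid :: "bool list \<Rightarrow> bool list \<Rightarrow> nat list \<Rightarrow> bool list" where
  "mid u w D1 = map (\<lambda>j. if j \<in> set D1 then w ! j else u ! j) [0..<length u]"

primrec bs :: "(bool list \<times> bool list) set \<Rightarrow> nat \<Rightarrow> nat \<Rightarrow> nat \<Rightarrow> bool list \<Rightarrow> bool \<Rightarrow> bool list
    \<Rightarrow> nat list \<Rightarrow> (bool list \<times> bool list, bool option, nat) qtree" where
  "bs X n i 0 u lu w D = Leaf (hd D)"
| "bs X n i (Suc f) u lu w D = (if length D \<le> 1 then Leaf (hd D) else
     bindT (vote X n i (mid u w (take (length D div 2) D)))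
       (\<lambda>lm. if lm \<noteq> lu then bs X n i f u lu (mid u w (take (length D div 2) D)) (take (length D div 2) D)
             else bs X n i f (mid u w (take (length D div 2) D)) lm w (drop (length D div 2) D)))"

context
  fixes n k N X orc
  assumes cp: "is_cpnet n k N" and X: "is_Xswap n X" and g: "good orc X n N"
begin

lemma diffPa:
  assumes i: "i < n" and lu: "length u = n" and lw: "length w = n" and ne: "pref N i u \<noteq> pref N i w"
  shows "\<exists>j\<in>Pa N i. u ! j \<noteq> w ! j"
  using pref_agree[OF cp i lu lw] ne by blast

lemma bs_ok:
  assumes "i < n" "length u = n" "length w = n" "distinct D" "\<forall>j<n. (u!j \<noteq> w!j) = (j \<in> set D)"
    "set D \<subseteq> {0..<n}" "lu = pref N i u" "pref N i u \<noteq> pref N i w" "length D \<le> 2 ^ f"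
  shows "fst (exec orc (bs X n i f u lu w D)) \<in> set D \<inter> Pa N i \<and>
         length (snd (exec orc (bs X n i f u lu w D))) \<le> f * (n - 1) \<and>
         set (snd (exec orc (bs X n i f u lu w D))) \<subseteq> X"
  using assms
proof (induction f arbitrary: u lu w D)
  case 0
  obtain j where j: "j \<in> Pa N i" "u ! j \<noteq> w ! j" using diffPa[OF 0(1,2,3,8)] by blast
  have "j < n" using Pa_sub[OF cp 0(1)] j by auto
  then have jD: "j \<in> set D" using 0(5) j by blast
  have "length D \<le> 1" using 0(9) by simp
  then have "D = [j]" using jD by (cases D) auto
  then show ?case using j by simp
next
  case (Suc f)
  note a = Suc.prems
  obtain j where j: "j \<in> Pa N i" "u ! j \<noteq> w ! j" using diffPa[OF a(1,2,3,8)] by blast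
  have "j < n" using Pa_sub[OF cp a(1)] j by auto
  then have jD: "j \<in> set D" using a(5) j by blast
  show ?case
  proof (cases "length D \<le> 1")
    case True
    then have "D = [j]" using jD by (cases D) auto
    then show ?thesis using j by simp
  next
    case False
    define h where "h = length D div 2"
    define D1 where "D1 = take h D"
    define D2 where "D2 = drop h D"
    define m where "m = mid u w D1"
    have lm: "length m = n" unfolding m_def mid_def using a(2) by simp
    have mnth: "\<And>j. j < n \<Longrightarrow> m ! j = (if j \<in> set D1 then w ! j else u ! j)"
      unfolding m_def mid_def using a(2) by simp
    have D12: "set D1 \<union> set D2 = set D" unfolding D1_def D2_def by (metis set_append append_take_drop_id)
    have Dd: "set D1 \<inter> set D2 = {}" unfolding D1_def D2_def
      using set_take_disj_set_drop_if_distinct[OF a(4)] by simp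
    have ev: "exec orc (vote X n i m) = (pref N i m, map (nb X i m) (others n i))"
      using exec_vote[OF g a(1) lm] .
    have vq: "set (map (nb X i m) (others n i)) \<subseteq> X" "length (map (nb X i m) (others n i)) = n - 1"
      using vote_qs[OF X a(1) lm] by auto
    have lD1: "length D1 \<le> 2 ^ f" unfolding D1_def h_def using a(9) by simp
    have lD2: "length D2 \<le> 2 ^ f" unfolding D2_def h_def using a(9) by simp
    have tree: "bs X n i (Suc f) u lu w D = bindT (vote X n i m)
       (\<lambda>lm. if lm \<noteq> lu then bs X n i f u lu m D1 else bs X n i f m lm w D2)"
      using False unfolding m_def D1_def D2_def h_def by simp
    show ?thesis
    proof (cases "pref N i m \<noteq> lu")
      case True
      have IH: "fst (exec orc (bs X n i f u lu m D1)) \<in> set D1 \<inter> Pa N i \<and>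
         length (snd (exec orc (bs X n i f u lu m D1))) \<le> f * (n - 1) \<and>
         set (snd (exec orc (bs X n i f u lu m D1))) \<subseteq> X"
      proof (rule Suc.IH)
        show "distinct D1" unfolding D1_def using a(4) by simp
        show "\<forall>j<n. (u ! j \<noteq> m ! j) = (j \<in> set D1)" using mnth a(5) D12 by auto
        show "set D1 \<subseteq> {0..<n}" using a(6) D12 by auto
        show "pref N i u \<noteq> pref N i m" using True a(7) by simp
        show "i < n" by (rule a(1))
        show "length u = n" by (rule a(2))
        show "length m = n" by (rule lm)
        show "lu = pref N i u" by (rule a(7))
        show "length D1 \<le> 2 ^ f" by (rule lD1)
      qed
      have e: "exec orc (bs X n i (Suc f) u lu w D) = (fst (exec orc (bs X n i f u lu m D1)),
          map (nb X i m) (others n i) @ snd (exec orc (bs X n i f u lu m D1)))"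
        unfolding tree exec_bind ev using True by simp
      show ?thesis unfolding e
      proof (intro conjI)
        show "fst (fst (exec orc (bs X n i f u lu m D1)), map (nb X i m) (others n i) @ snd (exec orc (bs X n i f u lu m D1))) \<in> set D \<inter> Pa N i"
          using IH D12 by auto
        show "length (snd (fst (exec orc (bs X n i f u lu m D1)), map (nb X i m) (others n i) @ snd (exec orc (bs X n i f u lu m D1)))) \<le> Suc f * (n - 1)"
          using IH vq(2) by simp
        show "set (snd (fst (exec orc (bs X n i f u lu m D1)), map (nb X i m) (others n i) @ snd (exec orc (bs X n i f u lu m D1)))) \<subseteq> X"
          using IH vq(1) by simp
      qed
    next
      case False
      have IH: "fst (exec orc (bs X n i f m (pref N i m) w D2)) \<in> set D2 \<inter> Pa N i \<and>
         length (snd (exec orc (bs X n i f m (pref N i m) w D2))) \<le> f * (n - 1) \<and>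
         set (snd (exec orc (bs X n i f m (pref N i m) w D2))) \<subseteq> X"
      proof (rule Suc.IH)
        show "distinct D2" unfolding D2_def using a(4) by simp
        show "\<forall>j<n. (m ! j \<noteq> w ! j) = (j \<in> set D2)" using mnth a(5) D12 Dd by auto
        show "set D2 \<subseteq> {0..<n}" using a(6) D12 by auto
        show "pref N i m \<noteq> pref N i w" using False a(7) a(8) by simp
        show "i < n" by (rule a(1))
        show "length m = n" by (rule lm)
        show "length w = n" by (rule a(3))
        show "pref N i m = pref N i m" by (rule refl)
        show "length D2 \<le> 2 ^ f" by (rule lD2)
      qed
      have lueq: "pref N i m = lu" using False by simp
      have e: "exec orc (bs X n i (Suc f) u lu w D) = (fst (exec orc (bs X n i f m (pref N i m) w D2)),
          map (nb X i m) (others n i) @ snd (exec orc (bs X n i f m (pref N i m) w D2)))"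
        unfolding tree exec_bind ev using lueq by simp
      show ?thesis unfolding e
      proof (intro conjI)
        show "fst (fst (exec orc (bs X n i f m (pref N i m) w D2)), map (nb X i m) (others n i) @ snd (exec orc (bs X n i f m (pref N i m) w D2))) \<in> set D \<inter> Pa N i"
          using IH D12 by auto
        show "length (snd (fst (exec orc (bs X n i f m (pref N i m) w D2)), map (nb X i m) (others n i) @ snd (exec orc (bs X n i f m (pref N i m) w D2)))) \<le> Suc f * (n - 1)"
          using IH vq(2) by simp
        show "set (snd (fst (exec orc (bs X n i f m (pref N i m) w D2)), map (nb X i m) (others n i) @ snd (exec orc (bs X n i f m (pref N i m) w D2)))) \<subseteq> X"
          using IH vq(1) by simp
      qed
    qed
  qed
qed

end


definition cnd :: "bool list set \<Rightarrow> nat \<Rightarrow> (bool list \<Rightarrow> bool) \<Rightarrow> nat set \<Rightarrow> bool" where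
  "cnd S i lab P \<longleftrightarrow> (\<exists>s\<in>S. \<exists>s'\<in>S. (\<forall>j\<in>P. outc i s ! j = outc i s' ! j) \<and> lab s \<noteq> lab s')"

definition pick :: "bool list set \<Rightarrow> nat \<Rightarrow> (bool list \<Rightarrow> bool) \<Rightarrow> nat set \<Rightarrow> bool list \<times> bool list" where
  "pick S i lab P = (SOME pr. fst pr \<in> S \<and> snd pr \<in> S \<and>
      (\<forall>j\<in>P. outc i (fst pr) ! j = outc i (snd pr) ! j) \<and> lab (fst pr) \<noteq> lab (snd pr))"

definition dif :: "nat \<Rightarrow> bool list \<Rightarrow> bool list \<Rightarrow> nat list" where
  "dif n u w = filter (\<lambda>j. u ! j \<noteq> w ! j) [0..<n]"

primrec fp :: "(bool list \<times> bool list) set \<Rightarrow> nat \<Rightarrow> nat \<Rightarrow> bool list set \<Rightarrow> (bool list \<Rightarrow> bool)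
    \<Rightarrow> nat \<Rightarrow> nat \<Rightarrow> nat set \<Rightarrow> (bool list \<times> bool list, bool option, nat set) qtree" where
  "fp X n i S lab T 0 P = Leaf P"
| "fp X n i S lab T (Suc f) P = (if cnd S i lab P then
     bindT (bs X n i T (outc i (fst (pick S i lab P))) (lab (fst (pick S i lab P)))
               (outc i (snd (pick S i lab P))) (dif n (outc i (fst (pick S i lab P))) (outc i (snd (pick S i lab P)))))
       (\<lambda>j. fp X n i S lab T f (insert j P))
   else Leaf P)"

context
  fixes n k N X orc
  assumes cp: "is_cpnet n k N" and X: "is_Xswap n X" and g: "good orc X n N"
begin

lemma fp_ok:
  assumes i: "i < n" and S: "\<forall>s\<in>S. length s = n - 1" and lab: "\<forall>s\<in>S. lab s = pref N i (outc i s)"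
    and T: "n \<le> 2 ^ T"
  shows "P \<subseteq> Pa N i \<Longrightarrow>
     P \<subseteq> fst (exec orc (fp X n i S lab T f P)) \<and> fst (exec orc (fp X n i S lab T f P)) \<subseteq> Pa N i \<and>
     (card (Pa N i) - card P < f \<longrightarrow> \<not> cnd S i lab (fst (exec orc (fp X n i S lab T f P)))) \<and>
     length (snd (exec orc (fp X n i S lab T f P))) \<le> (card (Pa N i) - card P) * (T * (n - 1)) \<and>
     set (snd (exec orc (fp X n i S lab T f P))) \<subseteq> X"
proof (induction f arbitrary: P)
  case 0
  then show ?case by simp
next
  case (Suc f)
  show ?case
  proof (cases "cnd S i lab P")
    case False
    then show ?thesis using Suc.prems by simp
  next
    case True
    define pr where "pr = pick S i lab P"
    have pr: "fst pr \<in> S \<and> snd pr \<in> S \<and>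
      (\<forall>j\<in>P. outc i (fst pr) ! j = outc i (snd pr) ! j) \<and> lab (fst pr) \<noteq> lab (snd pr)"
    proof -
      from True obtain s s' where "s \<in> S" "s' \<in> S" "(\<forall>j\<in>P. outc i s ! j = outc i s' ! j)" "lab s \<noteq> lab s'"
        unfolding cnd_def by blast
      then have "\<exists>pr. fst pr \<in> S \<and> snd pr \<in> S \<and>
        (\<forall>j\<in>P. outc i (fst pr) ! j = outc i (snd pr) ! j) \<and> lab (fst pr) \<noteq> lab (snd pr)"
        by (intro exI[of _ "(s, s')"]) simp
      then show ?thesis unfolding pr_def pick_def by (rule someI_ex)
    qed
    define u where "u = outc i (fst pr)"
    define w where "w = outc i (snd pr)"
    define D where "D = dif n u w"
    have lu: "length u = n" unfolding u_def using outc_len[of "fst pr" n i] S pr i by simp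
    have lw: "length w = n" unfolding w_def using outc_len[of "snd pr" n i] S pr i by simp
    have labu: "lab (fst pr) = pref N i u" unfolding u_def using lab pr by blast
    have labw: "lab (snd pr) = pref N i w" unfolding w_def using lab pr by blast
    have agP: "\<forall>j\<in>P. u ! j = w ! j" unfolding u_def w_def using pr by blast
    have Dset: "set D = {j. j < n \<and> u ! j \<noteq> w ! j}" unfolding D_def dif_def by auto
    have Dlen: "length D \<le> n" unfolding D_def dif_def using length_filter_le[of _ "[0..<n]"] by simp
    have bsr: "fst (exec orc (bs X n i T u (lab (fst pr)) w D)) \<in> set D \<inter> Pa N i \<and>
         length (snd (exec orc (bs X n i T u (lab (fst pr)) w D))) \<le> T * (n - 1) \<and>
         set (snd (exec orc (bs X n i T u (lab (fst pr)) w D))) \<subseteq> X"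
    proof -
      have d1: "distinct D" unfolding D_def dif_def by (rule distinct_filter) simp
      have d2: "\<forall>j<n. (u ! j \<noteq> w ! j) = (j \<in> set D)" unfolding Dset by simp
      have d3: "set D \<subseteq> {0..<n}" unfolding Dset by auto
      have d5: "pref N i u \<noteq> pref N i w" using labu labw pr by simp
      have d6: "length D \<le> 2 ^ T" using le_trans[OF Dlen T] .
      show ?thesis by (rule bs_ok[OF cp X g i lu lw d1 d2 d3 labu d5 d6])
    qed
    define j where "j = fst (exec orc (bs X n i T u (lab (fst pr)) w D))"
    have jPa: "j \<in> Pa N i" using bsr unfolding j_def by blast
    have jD: "j \<in> set D" using bsr unfolding j_def by blast
    have jnP: "j \<notin> P" using jD agP unfolding Dset by auto
    have fPa: "finite (Pa N i)" using Pa_fin[OF cp i] .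
    have fP: "finite P" using Suc.prems fPa finite_subset by blast
    have cins: "card (insert j P) = Suc (card P)" using card_insert_disjoint[OF fP jnP] .
    have insP: "insert j P \<subseteq> Pa N i" using Suc.prems jPa by blast
    have cle: "card (insert j P) \<le> card (Pa N i)" using card_mono[OF fPa insP] .
    note IH = Suc.IH[OF insP]
    have e: "exec orc (fp X n i S lab T (Suc f) P) =
       (fst (exec orc (fp X n i S lab T f (insert j P))),
        snd (exec orc (bs X n i T u (lab (fst pr)) w D)) @ snd (exec orc (fp X n i S lab T f (insert j P))))"
    proof -
      have t: "fp X n i S lab T (Suc f) P = bindT (bs X n i T u (lab (fst pr)) w D) (\<lambda>j. fp X n i S lab T f (insert j P))"
        using True unfolding u_def w_def D_def pr_def fp.simps by (simp only: if_True)
      show ?thesis unfolding t exec_bind j_def by (rule refl)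
    qed
    define R where "R = exec orc (fp X n i S lab T f (insert j P))"
    define Bq where "Bq = snd (exec orc (bs X n i T u (lab (fst pr)) w D))"
    have I1: "insert j P \<subseteq> fst R" and I2: "fst R \<subseteq> Pa N i"
      and I3: "card (Pa N i) - card (insert j P) < f \<longrightarrow> \<not> cnd S i lab (fst R)"
      and I4: "length (snd R) \<le> (card (Pa N i) - card (insert j P)) * (T * (n - 1))"
      and I5: "set (snd R) \<subseteq> X"
      using IH unfolding R_def by blast+
    have e': "exec orc (fp X n i S lab T (Suc f) P) = (fst R, Bq @ snd R)"
      using e unfolding R_def Bq_def .
    have B1: "length Bq \<le> T * (n - 1)" and B2: "set Bq \<subseteq> X" using bsr unfolding Bq_def by blast+
    have dd: "card (Pa N i) - card P = Suc (card (Pa N i) - card (insert j P))" using cins cle by simp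
    show ?thesis unfolding e' fst_conv snd_conv
    proof (intro conjI impI)
      show "P \<subseteq> fst R" using I1 by blast
      show "fst R \<subseteq> Pa N i" by (rule I2)
      assume "card (Pa N i) - card P < Suc f"
      then have "card (Pa N i) - card (insert j P) < f" using dd by simp
      then show "\<not> cnd S i lab (fst R)" using I3 by blast
    next
      have "length (Bq @ snd R) \<le> T * (n - 1) + (card (Pa N i) - card (insert j P)) * (T * (n - 1))"
        using B1 I4 by simp
      also have "\<dots> = (card (Pa N i) - card P) * (T * (n - 1))" unfolding dd by simp
      finally show "length (Bq @ snd R) \<le> (card (Pa N i) - card P) * (T * (n - 1))" .
      show "set (Bq @ snd R) \<subseteq> X" using B2 I5 by simp
    qed
  qed
qed

end


definition labf :: "bool list list \<Rightarrow> bool list \<Rightarrow> bool list \<Rightarrow> bool" where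
  "labf Sl labs s = (case map_of (zip Sl labs) s of None \<Rightarrow> False | Some b \<Rightarrow> b)"

definition learnvar :: "(bool list \<times> bool list) set \<Rightarrow> nat \<Rightarrow> nat \<Rightarrow> bool list set \<Rightarrow> bool list list
    \<Rightarrow> nat \<Rightarrow> (bool list \<times> bool list, bool option, bool list \<Rightarrow> bool) qtree" where
  "learnvar X n i S Sl T =
    bindT (seqT (map (\<lambda>s. vote X n i (outc i s)) Sl))
      (\<lambda>labs. bindT (fp X n i S (labf Sl labs) T n {})
         (\<lambda>P. Leaf (\<lambda>a. labf Sl labs (SOME s. s \<in> S \<and> (\<forall>j\<in>P. outc i s ! j = a ! j)))))"

lemma len_concat_const:
  "(\<And>s. s \<in> set Sl \<Longrightarrow> length (F s) = c) \<Longrightarrow> length (concat (map F Sl)) = length Sl * c"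
  by (induction Sl) auto

context
  fixes n k N X orc
  assumes cp: "is_cpnet n k N" and X: "is_Xswap n X" and g: "good orc X n N"
begin

lemma learnvar_ok:
  assumes U: "k_universal (n - 1) k S" and Sl: "set Sl = S" and i: "i < n"
    and T: "n \<le> 2 ^ T" and kn: "k < n"
  shows "(\<forall>a. length a = n \<longrightarrow> fst (exec orc (learnvar X n i S Sl T)) a = pref N i a) \<and>
     length (snd (exec orc (learnvar X n i S Sl T))) \<le> length Sl * (n - 1) + card (Pa N i) * (T * (n - 1)) \<and>
     set (snd (exec orc (learnvar X n i S Sl T))) \<subseteq> X"
proof -
  have SL: "\<forall>s\<in>S. length s = n - 1" using U unfolding k_universal_def by auto
  define pf where "pf = (\<lambda>s. pref N i (outc i s))"
  define labs where "labs = map pf Sl"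
  define Q1 where "Q1 = concat (map (\<lambda>s. map (nb X i (outc i s)) (others n i)) Sl)"
  have ev: "\<And>s. s \<in> set Sl \<Longrightarrow> exec orc (vote X n i (outc i s)) = (pf s, map (nb X i (outc i s)) (others n i))"
    unfolding pf_def using exec_vote[OF g i] outc_len SL Sl i by simp
  have e1: "exec orc (seqT (map (\<lambda>s. vote X n i (outc i s)) Sl)) = (labs, Q1)"
  proof -
    have m1: "map (\<lambda>t. fst (exec orc t)) (map (\<lambda>s. vote X n i (outc i s)) Sl) = map pf Sl"
      by (simp add: ev)
    have m2: "map (\<lambda>t. snd (exec orc t)) (map (\<lambda>s. vote X n i (outc i s)) Sl)
        = map (\<lambda>s. map (nb X i (outc i s)) (others n i)) Sl"
      by (simp add: ev)
    show ?thesis unfolding exec_seqT labs_def Q1_def m1 m2 ..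
  qed
  have lQ1: "length Q1 = length Sl * (n - 1)"
    unfolding Q1_def by (rule len_concat_const) (simp add: others_len[OF i])
  have sQ1: "set Q1 \<subseteq> X"
  proof -
    have "\<And>s. s \<in> set Sl \<Longrightarrow> set (map (nb X i (outc i s)) (others n i)) \<subseteq> X"
      using vote_qs(1)[OF X i] outc_len SL Sl i by simp
    then show ?thesis unfolding Q1_def by auto
  qed
  define lab where "lab = labf Sl labs"
  have labeq: "\<forall>s\<in>S. lab s = pref N i (outc i s)"
    unfolding lab_def labf_def labs_def using Sl by (simp add: map_of_zip_map pf_def)
  define R where "R = exec orc (fp X n i S lab T n {})"
  have F: "{} \<subseteq> fst R \<and> fst R \<subseteq> Pa N i \<and>
     (card (Pa N i) - card {} < n \<longrightarrow> \<not> cnd S i lab (fst R)) \<and>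
     length (snd R) \<le> (card (Pa N i) - card {}) * (T * (n - 1)) \<and> set (snd R) \<subseteq> X"
    unfolding R_def using fp_ok[OF cp X g i SL labeq T, of "{}" n] by simp
  have PPa: "fst R \<subseteq> Pa N i" using F by blast
  have cPa: "card (Pa N i) \<le> k" using Pa_card[OF cp i] .
  have nc: "\<not> cnd S i lab (fst R)" using F cPa kn by auto
  have kn1: "k \<le> n - 1" using kn by simp
  have PaP: "Pa N i \<subseteq> fst R"
  proof
    fix j assume jPa: "j \<in> Pa N i"
    show "j \<in> fst R"
    proof (rule ccontr)
      assume jR: "j \<notin> fst R"
      obtain o1 where o1: "outcome n o1" "pref N i o1 \<noteq> pref N i (o1[j := \<not> o1 ! j])"
        using cp3[OF cp] i jPa by blast
      have lo: "length o1 = n" using o1(1) unfolding outcome_def .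
      have Bs: "Pa N i \<subseteq> {0..<n} - {i}" using Pa_sub[OF cp i] .
      obtain s where s: "s \<in> S" "\<forall>j'\<in>Pa N i. outc i s ! j' = o1 ! j'"
        using univ_out[OF U i kn1 Bs cPa] by blast
      obtain s' where s': "s' \<in> S" "\<forall>j'\<in>Pa N i. outc i s' ! j' = (o1[j := \<not> o1 ! j]) ! j'"
        using univ_out[OF U i kn1 Bs cPa] by blast
      have ls: "length (outc i s) = n" using outc_len SL s i by simp
      have ls': "length (outc i s') = n" using outc_len SL s' i by simp
      have p1: "pref N i (outc i s) = pref N i o1" using pref_agree[OF cp i ls lo] s by simp
      have p2: "pref N i (outc i s') = pref N i (o1[j := \<not> o1 ! j])"
        using pref_agree[OF cp i ls'] lo s' by simp
      have ag: "\<forall>j'\<in>fst R. outc i s ! j' = outc i s' ! j'"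
      proof
        fix j' assume j': "j' \<in> fst R"
        then have "j' \<in> Pa N i" "j' \<noteq> j" using PPa jR by auto
        then show "outc i s ! j' = outc i s' ! j'" using s s' by simp
      qed
      have "lab s \<noteq> lab s'" using labeq s s' p1 p2 o1 by simp
      then have "cnd S i lab (fst R)" unfolding cnd_def using s s' ag by blast
      then show False using nc by blast
    qed
  qed
  have PR: "fst R = Pa N i" using PPa PaP by blast
  have res: "\<forall>a. length a = n \<longrightarrow> lab (SOME s. s \<in> S \<and> (\<forall>j\<in>fst R. outc i s ! j = a ! j)) = pref N i a"
  proof (intro allI impI)
    fix a :: "bool list" assume la: "length a = n"
    have Bs: "Pa N i \<subseteq> {0..<n} - {i}" using Pa_sub[OF cp i] .
    have "\<exists>s\<in>S. \<forall>j\<in>Pa N i. outc i s ! j = a ! j" using univ_out[OF U i kn1 Bs cPa] .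
    then have ex: "\<exists>s. s \<in> S \<and> (\<forall>j\<in>fst R. outc i s ! j = a ! j)" unfolding PR by blast
    define s where "s = (SOME s. s \<in> S \<and> (\<forall>j\<in>fst R. outc i s ! j = a ! j))"
    have s: "s \<in> S \<and> (\<forall>j\<in>fst R. outc i s ! j = a ! j)" unfolding s_def by (rule someI_ex[OF ex])
    have ls: "length (outc i s) = n" using outc_len SL s i by simp
    have "pref N i (outc i s) = pref N i a" using pref_agree[OF cp i ls la] s unfolding PR by simp
    then show "lab (SOME s. s \<in> S \<and> (\<forall>j\<in>fst R. outc i s ! j = a ! j)) = pref N i a"
      using labeq s unfolding s_def[symmetric] by simp
  qed
  have e: "exec orc (learnvar X n i S Sl T) =
     (\<lambda>a. lab (SOME s. s \<in> S \<and> (\<forall>j\<in>fst R. outc i s ! j = a ! j)), Q1 @ snd R)"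
    unfolding learnvar_def exec_bind e1 by (simp add: R_def lab_def)
  show ?thesis unfolding e fst_conv snd_conv
  proof (intro conjI)
    show "\<forall>a. length a = n \<longrightarrow> lab (SOME s. s \<in> S \<and> (\<forall>j\<in>fst R. outc i s ! j = a ! j)) = pref N i a"
      by (rule res)
    have "length (snd R) \<le> card (Pa N i) * (T * (n - 1))" using F by simp
    then show "length (Q1 @ snd R) \<le> length Sl * (n - 1) + card (Pa N i) * (T * (n - 1))"
      using lQ1 by simp
    show "set (Q1 @ snd R) \<subseteq> X" using sQ1 F by simp
  qed
qed

end


definition Sset :: "nat \<Rightarrow> nat \<Rightarrow> bool list set" where
  "Sset n k = (SOME S. k_universal (n - 1) k S \<and> card S = U n k)"
definition Slist :: "nat \<Rightarrow> nat \<Rightarrow> bool list list" where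
  "Slist n k = (SOME xs. set xs = Sset n k \<and> distinct xs)"
definition Tf :: "nat \<Rightarrow> nat" where
  "Tf n = (LEAST T. n \<le> 2 ^ T)"

definition learnerA :: "nat \<Rightarrow> nat \<Rightarrow> (bool list \<times> bool list) set \<Rightarrow> learner" where
  "learnerA n k X = bindT (seqT (map (\<lambda>i. learnvar X n i (Sset n k) (Slist n k) (Tf n)) [0..<n]))
     (\<lambda>gs. Leaf (\<lambda>x. (fst x ! swapvar x = (gs ! swapvar x) (fst x))))"

lemma full_univ: "k_universal m k {s::bool list. length s = m}"
  unfolding k_universal_def
proof (intro conjI allI impI)
  fix I and f :: "nat \<Rightarrow> bool" assume "I \<subseteq> {0..<m} \<and> card I = k"
  then have "\<forall>i\<in>I. map f [0..<m] ! i = f i" by auto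
  then show "\<exists>s\<in>{s. length s = m}. \<forall>i\<in>I. s ! i = f i" by (intro bexI[of _ "map f [0..<m]"]) auto
qed simp

lemma U_ex: "\<exists>S. k_universal (n - 1) k S \<and> card S = U n k"
proof -
  have "\<exists>S. k_universal (n - 1) k S \<and> card S = card {s::bool list. length s = n - 1}"
    using full_univ by blast
  then have "\<exists>c. \<exists>S. k_universal (n - 1) k S \<and> card S = c" by blast
  then show ?thesis unfolding U_def by (rule LeastI_ex)
qed

lemma Sset_ok: "k_universal (n - 1) k (Sset n k)" "card (Sset n k) = U n k"
  using someI_ex[OF U_ex[of n k]] unfolding Sset_def by blast+

lemma Sset_fin: "finite (Sset n k)"
proof -
  have "Sset n k \<subseteq> {s. set s \<subseteq> UNIV \<and> length s = n - 1}"
    using Sset_ok(1) unfolding k_universal_def by auto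
  moreover have "finite {s::bool list. set s \<subseteq> UNIV \<and> length s = n - 1}"
    by (rule finite_lists_length_eq[OF finite_UNIV])
  ultimately show ?thesis using finite_subset by blast
qed

lemma Slist_ok: "set (Slist n k) = Sset n k" "distinct (Slist n k)" "length (Slist n k) = U n k"
proof -
  have "\<exists>xs. set xs = Sset n k \<and> distinct xs" using finite_distinct_list[OF Sset_fin] .
  then have h: "set (Slist n k) = Sset n k \<and> distinct (Slist n k)" unfolding Slist_def by (rule someI_ex)
  then show "set (Slist n k) = Sset n k" "distinct (Slist n k)" by blast+
  show "length (Slist n k) = U n k" using h distinct_card Sset_ok(2) by metis
qed

lemma Tf_ok: "n \<le> 2 ^ Tf n"
proof -
  have "n \<le> 2 ^ n" using less_exp[of n] by simp
  then show ?thesis unfolding Tf_def by (rule LeastI)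
qed

context
  fixes n k N X orc
  assumes cp: "is_cpnet n k N" and X: "is_Xswap n X" and g: "good orc X n N"
begin

lemma main_ok:
  assumes nk: "2 * k + 2 < n" and r: "runs orc (learnerA n k X) h qs"
  shows "(\<forall>x\<in>X. h x = concept n N x) \<and> set qs \<subseteq> X \<and>
     length qs \<le> n * (U n k * (n - 1)) + net_edges n N * (Tf n * (n - 1))"
proof -
  define LV where "LV = (\<lambda>i. exec orc (learnvar X n i (Sset n k) (Slist n k) (Tf n)))"
  have kn: "k < n" using nk by simp
  have LVok: "\<And>i. i < n \<Longrightarrow> (\<forall>a. length a = n \<longrightarrow> fst (LV i) a = pref N i a) \<and>
     length (snd (LV i)) \<le> U n k * (n - 1) + card (Pa N i) * (Tf n * (n - 1)) \<and>
     set (snd (LV i)) \<subseteq> X"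
    unfolding LV_def using learnvar_ok[OF cp X g Sset_ok(1) Slist_ok(1) _ Tf_ok kn] Slist_ok(3) by simp
  have e: "exec orc (learnerA n k X) =
    (\<lambda>x. (fst x ! swapvar x = (map (\<lambda>i. fst (LV i)) [0..<n] ! swapvar x) (fst x)),
     concat (map (\<lambda>i. snd (LV i)) [0..<n]))"
    unfolding learnerA_def exec_bind exec_seqT LV_def by (simp add: comp_def)
  have hq: "h = (\<lambda>x. (fst x ! swapvar x = (map (\<lambda>i. fst (LV i)) [0..<n] ! swapvar x) (fst x)))"
    and qq: "qs = concat (map (\<lambda>i. snd (LV i)) [0..<n])"
    using runs_exec[OF r] e by simp_all
  have c1: "\<forall>x\<in>X. h x = concept n N x"
  proof
    fix x assume x: "x \<in> X"
    note f = Xswap_facts[OF X x]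
    have "(map (\<lambda>i. fst (LV i)) [0..<n] ! swapvar x) (fst x) = pref N (swapvar x) (fst x)"
      using LVok[OF f(1)] f(1,2) by simp
    then show "h x = concept n N x" unfolding hq using concept_X[OF cp X x] by simp
  qed
  have "\<forall>i\<in>set [0..<n]. set (snd (LV i)) \<subseteq> X" using LVok by simp
  then have c2: "set qs \<subseteq> X" unfolding qq by auto
  have "length qs = (\<Sum>i\<leftarrow>[0..<n]. length (snd (LV i)))" unfolding qq by (simp add: length_concat comp_def)
  also have "\<dots> \<le> (\<Sum>i\<leftarrow>[0..<n]. U n k * (n - 1) + card (Pa N i) * (Tf n * (n - 1)))"
    by (rule sum_list_mono) (use LVok in auto)
  also have "\<dots> = (\<Sum>i<n. U n k * (n - 1) + card (Pa N i) * (Tf n * (n - 1)))"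
    by (simp add: interv_sum_list_conv_sum_set_nat atLeast0LessThan)
  also have "\<dots> = n * (U n k * (n - 1)) + net_edges n N * (Tf n * (n - 1))"
    unfolding net_edges_def by (simp add: sum.distrib sum_distrib_right)
  finally show ?thesis using c1 c2 by blast
qed

end


lemma powA_real:
  fixes a :: nat assumes a: "1 \<le> a"
  shows "real (a - 1) ^ a * 2 \<le> real a ^ a"
proof -
  have ra: "real a \<ge> 1" using a by simp
  have x1: "1 - 1 / real a \<le> exp (- (1 / real a))"
    using exp_ge_add_one_self[of "- (1 / real a)"] by simp
  have x0: "0 \<le> 1 - 1 / real a" using ra by (simp add: field_simps)
  have "(1 - 1 / real a) ^ a \<le> exp (- (1 / real a)) ^ a" by (rule power_mono[OF x1 x0])
  also have "\<dots> = exp (real a * (- (1 / real a)))" by (rule exp_of_nat_mult[symmetric])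
  also have "\<dots> = exp (-1)" using ra by simp
  finally have h1: "(1 - 1 / real a) ^ a \<le> exp (-1)" .
  have "2 \<le> exp (1::real)" using exp_ge_add_one_self[of "1::real"] by simp
  then have h2: "exp (-1) * 2 \<le> (1::real)" by (simp add: exp_minus field_simps)
  have "real (a - 1) = real a * (1 - 1 / real a)" using a ra by (simp add: field_simps of_nat_diff)
  then have "real (a - 1) ^ a * 2 = real a ^ a * ((1 - 1 / real a) ^ a * 2)"
    by (simp add: power_mult_distrib)
  also have "\<dots> \<le> real a ^ a * (exp (-1) * 2)"
    using h1 by (intro mult_left_mono) auto
  also have "\<dots> \<le> real a ^ a" using h2 by (intro mult_left_le) auto
  finally show ?thesis .
qed

lemma powA: "1 \<le> (a::nat) \<Longrightarrow> (a - 1) ^ a * 2 \<le> a ^ a"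
proof -
  assume a: "1 \<le> a"
  have "real ((a - 1) ^ a * 2) \<le> real (a ^ a)" using powA_real[OF a] by simp
  then show ?thesis unfolding of_nat_le_iff .
qed

lemma card_match:
  assumes I: "I \<subseteq> {0..<N}"
  shows "card {v::bool list. length v = N \<and> (\<forall>i\<in>I. v ! i = f i)} = 2 ^ (N - card I)"
proof -
  let ?M = "{v::bool list. length v = N \<and> (\<forall>i\<in>I. v ! i = f i)}"
  let ?B = "\<lambda>i. if i \<in> I then {f i} else (UNIV :: bool set)"
  let ?P = "PiE {0..<N} ?B"
  have bij: "bij_betw (\<lambda>v. restrict (nth v) {0..<N}) ?M ?P"
  proof (rule bij_betw_byWitness[where f' = "\<lambda>h. map h [0..<N]"])
    show "\<forall>v\<in>?M. map (restrict (nth v) {0..<N}) [0..<N] = v"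
    proof
      fix v assume "v \<in> ?M"
      then have lv: "length v = N" by simp
      have mm: "map (restrict (nth v) {0..<N}) [0..<N] = map (nth v) [0..<N]" by (rule map_cong) auto
      have "map (nth v) [0..<N] = v" using map_nth[of v] lv by simp
      with mm show "map (restrict (nth v) {0..<N}) [0..<N] = v" by (rule trans)
    qed
    show "\<forall>h\<in>?P. restrict (nth (map h [0..<N])) {0..<N} = h"
    proof
      fix h assume h: "h \<in> ?P"
      show "restrict (nth (map h [0..<N])) {0..<N} = h"
      proof
        fix x show "restrict (nth (map h [0..<N])) {0..<N} x = h x"
          using h by (cases "x < N") (auto simp: PiE_def extensional_def)
      qed
    qed
    show "(\<lambda>v. restrict (nth v) {0..<N}) ` ?M \<subseteq> ?P"
    proof
      fix h assume "h \<in> (\<lambda>v. restrict (nth v) {0..<N}) ` ?M"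
      then obtain v where v: "v \<in> ?M" and h: "h = restrict (nth v) {0..<N}" by blast
      show "h \<in> ?P" unfolding h
      proof (rule restrict_PiE_iff[THEN iffD2], intro ballI)
        fix i assume "i \<in> {0..<N}"
        show "v ! i \<in> ?B i" using v by (cases "i \<in> I") auto
      qed
    qed
    show "(\<lambda>h. map h [0..<N]) ` ?P \<subseteq> ?M"
    proof
      fix v assume "v \<in> (\<lambda>h. map h [0..<N]) ` ?P"
      then obtain h where h: "h \<in> ?P" and v: "v = map h [0..<N]" by blast
      have "\<forall>i\<in>I. v ! i = f i"
      proof
        fix i assume i: "i \<in> I"
        then have iN: "i < N" using I by auto
        have "h i \<in> ?B i" using h iN by (auto simp: PiE_iff)
        then show "v ! i = f i" using i iN v by simp
      qed
      then show "v \<in> ?M" using v by simp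
    qed
  qed
  have "card ?M = card ?P" using bij_betw_same_card[OF bij] .
  also have "\<dots> = (\<Prod>i\<in>{0..<N}. card (?B i))" by (rule card_PiE) simp
  also have "\<dots> = (\<Prod>i\<in>{0..<N}. if i \<in> I then 1 else 2)"
    by (rule prod.cong) auto
  also have "\<dots> = (\<Prod>i\<in>{0..<N} \<inter> {x. x \<in> I}. 1) * (\<Prod>i\<in>{0..<N} \<inter> - {x. x \<in> I}. 2)"
    by (rule prod.If_cases) simp
  also have "\<dots> = 2 ^ card ({0..<N} - I)" by (simp add: Diff_eq)
  also have "card ({0..<N} - I) = N - card I" using card_Diff_subset[OF finite_subset[OF I] I] by simp
  finally show ?thesis .
qed


lemma key_ineq:
  fixes cP a M :: nat
  assumes a: "1 \<le> a" and c: "cP < 2 ^ M"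
  shows "cP * (a - 1) ^ (a * M) < a ^ (a * M)"
proof (cases "(a - 1) ^ (a * M) = 0")
  case True
  have "0 < a ^ (a * M)" using a by simp
  then show ?thesis unfolding True by simp
next
  case False
  have "(a - 1) ^ (a * M) * 2 ^ M = ((a - 1) ^ a * 2) ^ M"
    by (simp add: power_mult power_mult_distrib)
  also have "\<dots> \<le> (a ^ a) ^ M" by (rule power_mono[OF powA[OF a]]) simp
  also have "\<dots> = a ^ (a * M)" by (simp add: power_mult)
  finally have h: "(a - 1) ^ (a * M) * 2 ^ M \<le> a ^ (a * M)" .
  have pz: "0 < (a - 1) ^ (a * M)" using False gr0I by blast
  have "cP * (a - 1) ^ (a * M) < 2 ^ M * (a - 1) ^ (a * M)"
    by (rule mult_strict_right_mono[OF c pz])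
  moreover have h': "2 ^ M * (a - 1) ^ (a * M) \<le> a ^ (a * M)" using h by (simp only: mult.commute)
  ultimately show ?thesis by (rule less_le_trans)
qed

lemma exists_univ:
  assumes kN: "k \<le> N" and n2: "2 \<le> n" and Nn: "N \<le> n" and L: "n \<le> 2 ^ L"
  shows "\<exists>S. k_universal N k S \<and> card S \<le> 2 ^ k * (2 * (k + 1) * L)"
proof -
  define a :: nat where "a = 2 ^ k"
  define M where "M = 2 * (k + 1) * L"
  define t where "t = a * M"
  define V where "V = {v::bool list. length v = N}"
  define Mt where "Mt = (\<lambda>I (f :: nat \<Rightarrow> bool). {v::bool list. length v = N \<and> (\<forall>i\<in>I. v ! i = f i)})"
  define Is where "Is = {I. I \<subseteq> {0..<N} \<and> card I = k}"
  define Pat where "Pat = Sigma Is (\<lambda>I. PiE I (\<lambda>_. UNIV :: bool set))"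
  define Bad where "Bad = (\<lambda>p. PiE {0..<t} (\<lambda>_. V - Mt (fst p) (snd p)))"
  define TT where "TT = PiE {0..<t} (\<lambda>_. V)"
  have a1: "1 \<le> a" unfolding a_def by simp
  have fV: "finite V" unfolding V_def using finite_lists_length_eq[OF finite_UNIV, of N] by simp
  have cV: "card V = 2 ^ N" unfolding V_def using card_lists_length_eq[where A="UNIV::bool set" and n=N]
    by (simp add: card_UNIV_bool)
  have fIs: "finite Is" unfolding Is_def by (rule finite_subset[of _ "Pow {0..<N}"]) auto
  have fPat: "finite Pat" unfolding Pat_def using fIs
    by (intro finite_SigmaI) (auto simp: Is_def intro!: finite_PiE dest: finite_subset)
  have cTT: "card TT = (2 ^ N) ^ t" unfolding TT_def using cV by (simp add: card_PiE)
  have fTT: "finite TT" unfolding TT_def using fV by (intro finite_PiE) auto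
  have cBad: "\<And>p. p \<in> Pat \<Longrightarrow> card (Bad p) = (2 ^ N - 2 ^ (N - k)) ^ t"
  proof -
    fix p assume p: "p \<in> Pat"
    then have I: "fst p \<subseteq> {0..<N}" "card (fst p) = k" unfolding Pat_def Is_def by auto
    have cM: "card (Mt (fst p) (snd p)) = 2 ^ (N - k)" unfolding Mt_def using card_match[OF I(1)] I(2) by simp
    have MV: "Mt (fst p) (snd p) \<subseteq> V" unfolding Mt_def V_def by auto
    have "card (V - Mt (fst p) (snd p)) = 2 ^ N - 2 ^ (N - k)"
      using card_Diff_subset[OF finite_subset[OF MV fV] MV] cV cM by simp
    then show "card (Bad p) = (2 ^ N - 2 ^ (N - k)) ^ t" unfolding Bad_def by (simp add: card_PiE)
  qed
  have cPat: "card Pat \<le> N ^ k * a"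
  proof -
    have "card Pat = (\<Sum>I\<in>Is. card (PiE I (\<lambda>_. UNIV :: bool set)))"
      unfolding Pat_def using fIs
      by (intro card_SigmaI) (auto simp: Is_def intro!: finite_PiE dest: finite_subset)
    also have "\<dots> = (\<Sum>I\<in>Is. a)"
    proof (rule sum.cong)
      fix I assume "I \<in> Is"
      then have "finite I" "card I = k" unfolding Is_def using finite_subset by auto
      then show "card (PiE I (\<lambda>_. UNIV :: bool set)) = a" unfolding a_def
        by (simp add: card_PiE card_UNIV_bool)
    qed simp
    also have "\<dots> = card Is * a" by simp
    also have "card Is = N choose k" unfolding Is_def using n_subsets[of "{0..<N}" k] by simp
    also have "N choose k \<le> N ^ k" by (rule binomial_le_pow[OF kN])
    finally show ?thesis by simp
  qed
  have cP2: "card Pat < 2 ^ M"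
  proof -
    have n1: "1 < n" using n2 by simp
    have "N ^ k * a \<le> n ^ k * n ^ k"
      unfolding a_def by (intro mult_mono power_mono) (use Nn n2 in auto)
    also have "\<dots> = n ^ (2 * k)" by (simp add: power_add[symmetric] mult_2)
    also have "\<dots> < n ^ (2 * (k + 1))" using n1 by (intro power_strict_increasing) auto
    also have "\<dots> \<le> (2 ^ L) ^ (2 * (k + 1))" by (rule power_mono[OF L]) simp
    also have "\<dots> = 2 ^ M"
    proof -
      have "M = L * (2 * (k + 1))" unfolding M_def by simp
      then show ?thesis by (simp only: power_mult)
    qed
    finally show ?thesis using cPat by simp
  qed
  have main: "card Pat * (2 ^ N - 2 ^ (N - k)) ^ t < (2 ^ N) ^ t"
  proof -
    have e1: "(2::nat) ^ N = 2 ^ (N - k) * a" unfolding a_def using kN by (simp add: power_add[symmetric])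
    have e2: "(2::nat) ^ N - 2 ^ (N - k) = 2 ^ (N - k) * (a - 1)" unfolding e1 by (simp add: diff_mult_distrib2)
    have k1: "card Pat * (a - 1) ^ t < a ^ t" unfolding t_def by (rule key_ineq[OF a1 cP2])
    have pos: "0 < ((2::nat) ^ (N - k)) ^ t" by simp
    have "card Pat * (2 ^ N - 2 ^ (N - k)) ^ t = (2 ^ (N - k)) ^ t * (card Pat * (a - 1) ^ t)"
      unfolding e2 by (simp add: power_mult_distrib)
    also have "\<dots> < (2 ^ (N - k)) ^ t * a ^ t" using k1 pos by simp
    also have "\<dots> = (2 ^ N) ^ t" unfolding e1 by (simp add: power_mult_distrib)
    finally show ?thesis .
  qed
  have "card (\<Union>p\<in>Pat. Bad p) \<le> (\<Sum>p\<in>Pat. card (Bad p))" by (rule card_UN_le[OF fPat])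
  also have "\<dots> = (\<Sum>p\<in>Pat. (2 ^ N - 2 ^ (N - k)) ^ t)" by (rule sum.cong) (auto simp: cBad)
  also have "\<dots> = card Pat * (2 ^ N - 2 ^ (N - k)) ^ t" by simp
  finally have cU: "card (\<Union>p\<in>Pat. Bad p) < card TT" using main cTT by simp
  have "\<not> TT \<subseteq> (\<Union>p\<in>Pat. Bad p)"
  proof
    assume sub: "TT \<subseteq> (\<Union>p\<in>Pat. Bad p)"
    have fU: "finite (\<Union>p\<in>Pat. Bad p)" using fPat unfolding Bad_def using fV by (auto intro!: finite_PiE)
    have "card TT \<le> card (\<Union>p\<in>Pat. Bad p)" by (rule card_mono[OF fU sub])
    then show False using cU by simp
  qed
  then obtain \<tau> where tT: "\<tau> \<in> TT" and tB: "\<forall>p\<in>Pat. \<tau> \<notin> Bad p" by blast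
  define S where "S = \<tau> ` {0..<t}"
  have SV: "S \<subseteq> V" unfolding S_def using tT unfolding TT_def by (auto simp: PiE_iff)
  have univ: "k_universal N k S"
    unfolding k_universal_def
  proof (intro conjI allI impI)
    show "S \<subseteq> {s. length s = N}" using SV unfolding V_def .
    fix I and f :: "nat \<Rightarrow> bool" assume I: "I \<subseteq> {0..<N} \<and> card I = k"
    define p where "p = (I, restrict f I)"
    have pP: "p \<in> Pat" unfolding p_def Pat_def Is_def using I by auto
    have "\<tau> \<notin> Bad p" using tB pP by blast
    moreover have "\<tau> \<in> extensional {0..<t}" using tT unfolding TT_def by (simp add: PiE_iff)
    ultimately have "\<not> (\<forall>x\<in>{0..<t}. \<tau> x \<in> V - Mt I (restrict f I))"
      unfolding Bad_def p_def by (auto simp: PiE_iff)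
    then obtain x where x: "x \<in> {0..<t}" "\<tau> x \<notin> V - Mt I (restrict f I)" by blast
    have "\<tau> x \<in> V" using tT x(1) unfolding TT_def by (auto simp: PiE_iff)
    then have "\<tau> x \<in> Mt I (restrict f I)" using x(2) by blast
    then have "\<forall>i\<in>I. \<tau> x ! i = f i" unfolding Mt_def by simp
    moreover have "\<tau> x \<in> S" unfolding S_def using x(1) by blast
    ultimately show "\<exists>s\<in>S. \<forall>i\<in>I. s ! i = f i" by blast
  qed
  have "card S \<le> t" unfolding S_def using card_image_le[of "{0..<t}" \<tau>] by simp
  then have "card S \<le> 2 ^ k * (2 * (k + 1) * L)" unfolding t_def a_def M_def .
  then show ?thesis using univ by blast
qed

lemma U_bound:
  assumes "k \<le> n - 1" "2 \<le> n"
  shows "U n k \<le> 2 ^ k * (2 * (k + 1) * Tf n)"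
proof -
  obtain S where S: "k_universal (n - 1) k S" "card S \<le> 2 ^ k * (2 * (k + 1) * Tf n)"
    using exists_univ[OF assms(1) assms(2) _ Tf_ok] by auto
  have "U n k \<le> card S" unfolding U_def by (rule Least_le) (use S in blast)
  then show ?thesis using S(2) by simp
qed


lemma Tf_le: "Tf n \<le> n"
proof -
  have "n \<le> 2 ^ n" using less_exp[of n] by simp
  then show ?thesis unfolding Tf_def by (rule Least_le)
qed

lemma Tf_real: assumes n: "1 \<le> n" shows "real (Tf n) \<le> log 2 (real n) + 1"
proof (cases "Tf n = 0")
  case True
  have "0 \<le> log 2 (real n)" using n by simp
  then show ?thesis using True by simp
next
  case False
  then have "Tf n - 1 < Tf n" by simp
  then have "\<not> n \<le> 2 ^ (Tf n - 1)" unfolding Tf_def by (rule not_less_Least)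
  then have lt: "real (2 ^ (Tf n - 1)) < real n" by simp
  have "log 2 (real (2 ^ (Tf n - 1))) < log 2 (real n)"
    using lt n by (subst log_less_cancel_iff) auto
  then have "real (Tf n - 1) < log 2 (real n)" by simp
  then show ?thesis using False by simp
qed

lemma edges_le: assumes cp: "is_cpnet n k N" shows "net_edges n N \<le> n * k"
proof -
  have "net_edges n N \<le> (\<Sum>i<n. k)" unfolding net_edges_def
    by (rule sum_mono) (use Pa_card[OF cp] in auto)
  then show ?thesis by simp
qed

lemma lin1: fixes q x1 x2 x3 x4 :: real
  assumes "q \<le> x1 + x3" "x3 \<le> x4" "x4 = 2 * x2" "0 \<le> x1" "0 \<le> x2" shows "q \<le> 8 * (x1 + x2)"
  using assms unfolding distrib_left by linarith
lemma lin2: fixes q x1 x5 x2 x3 x4 x6 :: real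
  assumes "q \<le> x1 + x3" "x3 \<le> x4" "x4 = 2 * x2" "x1 \<le> x6" "x6 = 8 * x5" "0 \<le> x2" shows "q \<le> 8 * (x5 + x2)"
  using assms unfolding distrib_left by linarith

lemma real_arith:
  fixes q nn u e t l p w :: real
  assumes q: "q \<le> nn * nn * u + e * (t * nn)" and nn: "0 \<le> nn" and u: "0 \<le> u" and e: "0 \<le> e"
    and t: "t \<le> 2 * l" and l: "1 \<le> l" and ub: "u \<le> 8 * w * l * p"
  shows "q \<le> 8 * (nn ^ 2 * u + e * nn * l)" "q \<le> 8 * (nn ^ 2 * w * l * p + e * nn * l)"
proof -
  have h1: "e * (t * nn) \<le> e * (2 * l * nn)"
    by (intro mult_left_mono mult_right_mono) (use t nn e in auto)
  have h1': "e * (2 * l * nn) = 2 * (e * nn * l)" by (simp add: algebra_simps)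
  have h2: "nn * nn * u \<le> nn * nn * (8 * w * l * p)"
    by (intro mult_left_mono) (use ub nn in auto)
  have h2': "nn * nn * (8 * w * l * p) = 8 * (nn ^ 2 * w * l * p)" by (simp add: algebra_simps power2_eq_square)
  have sq: "nn * nn * u = nn ^ 2 * u" by (simp add: power2_eq_square)
  have p1: "0 \<le> nn ^ 2 * u" using u by simp
  have p2: "0 \<le> e * nn * l" using e nn l by simp
  have q': "q \<le> nn ^ 2 * u + e * (t * nn)" using q sq by simp
  show "q \<le> 8 * (nn ^ 2 * u + e * nn * l)" by (rule lin1[OF q' h1 h1' p1 p2])
  show "q \<le> 8 * (nn ^ 2 * w * l * p + e * nn * l)" by (rule lin2[OF q h1 h1' h2 h2' p2])
qed

lemma bound_U_real:
  assumes kn: "k \<le> n - 1" and n2: "2 \<le> n"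
  shows "real (U n k) \<le> 8 * 2 ^ k * log 2 (real n) * real (max k 2) powr (1 * log 2 (real (max k 2)))"
proof -
  let ?l = "log 2 (real n)"
  let ?m = "real (max k 2)"
  have l1: "1 \<le> ?l" using n2 by simp
  have n1: "1 \<le> n" using n2 by simp
  have T: "real (Tf n) \<le> 2 * ?l" using Tf_real[OF n1] l1 by linarith
  have "real (U n k) \<le> real (2 ^ k * (2 * (k + 1) * Tf n))" using U_bound[OF kn n2] by linarith
  also have "\<dots> = 2 ^ k * (2 * (real k + 1) * real (Tf n))" by (simp add: algebra_simps)
  also have "\<dots> \<le> 2 ^ k * (2 * (real k + 1) * (2 * ?l))"
    by (intro mult_left_mono) (use T in auto)
  also have "\<dots> \<le> 2 ^ k * (2 * (2 * ?m) * (2 * ?l))"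
    by (intro mult_left_mono mult_right_mono) (use l1 in auto)
  also have "\<dots> = 8 * 2 ^ k * ?l * ?m" by (simp add: algebra_simps)
  also have "\<dots> \<le> 8 * 2 ^ k * ?l * ?m powr (1 * log 2 ?m)"
  proof (intro mult_left_mono)
    have m1: "1 \<le> ?m" by simp
    have lg: "1 \<le> log 2 ?m" by simp
    have a: "?m powr 1 \<le> ?m powr (log 2 ?m)" by (rule powr_mono[OF lg m1])
    have b: "?m powr 1 = ?m" by (rule powr_one) simp
    show "?m \<le> ?m powr (1 * log 2 ?m)" using a b by simp
  qed (use l1 in auto)
  finally show ?thesis .
qed


lemma learns_generic:
  assumes gd: "\<And>n k X L N. 2 * k + 2 < n \<Longrightarrow> is_Xswap n X \<Longrightarrow> L \<subseteq> X \<Longrightarrow> is_cpnet n k N \<Longrightarrow>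
      (\<forall>x\<in>X. card (F1 n X x \<inter> L) \<le> b n k) \<Longrightarrow> good (oracle n N L) X n N"
  shows "learns_with_bounds oracle b learnerA"
  unfolding learns_with_bounds_def
proof (intro conjI)
  show "\<forall>n k X L N h qs.
       2 * k + 2 < n \<and> is_Xswap n X \<and> L \<subseteq> X \<and> is_cpnet n k N \<and>
       (\<forall>x\<in>X. card (F1 n X x \<inter> L) \<le> b n k) \<and>
       runs (oracle n N L) (learnerA n k X) h qs
       \<longrightarrow> (\<forall>x\<in>X. h x = concept n N x) \<and> set qs \<subseteq> X"
  proof (intro allI impI)
  fix n k X L N h qs
  assume H: "2 * k + 2 < n \<and> is_Xswap n X \<and> L \<subseteq> X \<and> is_cpnet n k N \<and>
       (\<forall>x\<in>X. card (F1 n X x \<inter> L) \<le> b n k) \<and> runs (oracle n N L) (learnerA n k X) h qs"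
  then have g: "good (oracle n N L) X n N" using gd by blast
  have M: "(\<forall>x\<in>X. h x = concept n N x) \<and> set qs \<subseteq> X \<and>
     length qs \<le> n * (U n k * (n - 1)) + net_edges n N * (Tf n * (n - 1))"
    using main_ok[OF _ _ g] H by blast
  then show "(\<forall>x\<in>X. h x = concept n N x) \<and> set qs \<subseteq> X" by blast
  qed
next
  show "\<forall>k. \<exists>c d::nat. \<forall>n X L N h qs.
       2 * k + 2 < n \<and> is_Xswap n X \<and> L \<subseteq> X \<and> is_cpnet n k N \<and>
       (\<forall>x\<in>X. card (F1 n X x \<inter> L) \<le> b n k) \<and>
       runs (oracle n N L) (learnerA n k X) h qs
       \<longrightarrow> length qs \<le> c * (n + net_size n N + card L) ^ d"
  proof
  fix k
  show "\<exists>c d::nat. \<forall>n X L N h qs.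
       2 * k + 2 < n \<and> is_Xswap n X \<and> L \<subseteq> X \<and> is_cpnet n k N \<and>
       (\<forall>x\<in>X. card (F1 n X x \<inter> L) \<le> b n k) \<and>
       runs (oracle n N L) (learnerA n k X) h qs
       \<longrightarrow> length qs \<le> c * (n + net_size n N + card L) ^ d"
  proof (intro exI allI impI)
    fix n X L N h qs
    assume H: "2 * k + 2 < n \<and> is_Xswap n X \<and> L \<subseteq> X \<and> is_cpnet n k N \<and>
       (\<forall>x\<in>X. card (F1 n X x \<inter> L) \<le> b n k) \<and> runs (oracle n N L) (learnerA n k X) h qs"
    then have g: "good (oracle n N L) X n N" using gd by blast
    have cp: "is_cpnet n k N" using H by blast
    have Q: "length qs \<le> n * (U n k * (n - 1)) + net_edges n N * (Tf n * (n - 1))"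
      using main_ok[OF _ _ g] H by blast
    have kn: "k \<le> n - 1" "2 \<le> n" using H by auto
    have h1: "U n k \<le> 2 ^ k * (2 * (k + 1) * n)"
      using U_bound[OF kn] Tf_le[of n] by (meson le_trans mult_le_mono2)
    have h2: "net_edges n N \<le> n * k" using edges_le[OF cp] .
    have "n * (U n k * (n - 1)) + net_edges n N * (Tf n * (n - 1))
        \<le> n * ((2 ^ k * (2 * (k + 1) * n)) * n) + (n * k) * (n * n)"
    proof (rule add_mono)
      show "n * (U n k * (n - 1)) \<le> n * (2 ^ k * (2 * (k + 1) * n) * n)"
        using h1 by (intro mult_le_mono2 mult_le_mono) auto
      show "net_edges n N * (Tf n * (n - 1)) \<le> n * k * (n * n)"
        using h2 Tf_le[of n] by (intro mult_le_mono mult_le_mono2) auto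
    qed
    also have "\<dots> = (2 ^ k * (2 * (k + 1)) + k) * n ^ 3"
      by (simp add: algebra_simps power3_eq_cube)
    also have "\<dots> \<le> (2 ^ k * (2 * (k + 1)) + k) * (n + net_size n N + card L) ^ 3"
      by (intro mult_le_mono2 power_mono) auto
    finally show "length qs \<le> (2 ^ k * (2 * (k + 1)) + k) * (n + net_size n N + card L) ^ 3"
      using Q by linarith
  qed
  qed
next
  show "\<exists>C D :: real. \<forall>n k X L N h qs.
       2 * k + 2 < n \<and> is_Xswap n X \<and> L \<subseteq> X \<and> is_cpnet n k N \<and>
       (\<forall>x\<in>X. card (F1 n X x \<inter> L) \<le> b n k) \<and>
       runs (oracle n N L) (learnerA n k X) h qs
       \<longrightarrow> real (length qs) \<le> C * (real n ^ 2 * real (U n k)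
                  + real (net_edges n N) * real n * log 2 (real n)) \<and>
           real (length qs) \<le> C * (real n ^ 2 * 2 ^ k * log 2 (real n)
                  * real (max k 2) powr (D * log 2 (real (max k 2)))
                  + real (net_edges n N) * real n * log 2 (real n))"
  proof (intro exI allI impI)
    fix n k X L N h qs
    assume H: "2 * k + 2 < n \<and> is_Xswap n X \<and> L \<subseteq> X \<and> is_cpnet n k N \<and>
       (\<forall>x\<in>X. card (F1 n X x \<inter> L) \<le> b n k) \<and> runs (oracle n N L) (learnerA n k X) h qs"
    then have g: "good (oracle n N L) X n N" using gd by blast
    have Q: "length qs \<le> n * (U n k * (n - 1)) + net_edges n N * (Tf n * (n - 1))"
      using main_ok[OF _ _ g] H by blast
    have kn: "k \<le> n - 1" "2 \<le> n" using H by auto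
    have Q2: "length qs \<le> n * n * U n k + net_edges n N * (Tf n * n)"
    proof -
      have "n * (U n k * (n - 1)) \<le> n * n * U n k" by (simp add: algebra_simps)
      moreover have "net_edges n N * (Tf n * (n - 1)) \<le> net_edges n N * (Tf n * n)" by simp
      ultimately show ?thesis using Q by linarith
    qed
    then have Qr: "real (length qs) \<le> real n * real n * real (U n k) + real (net_edges n N) * (real (Tf n) * real n)"
      by (metis of_nat_add of_nat_le_iff of_nat_mult)
    have l1: "1 \<le> log 2 (real n)" using kn by simp
    have n1: "1 \<le> n" using kn by simp
    have t: "real (Tf n) \<le> 2 * log 2 (real n)" using Tf_real[OF n1] l1 by linarith
    have ub: "real (U n k) \<le> 8 * 2 ^ k * log 2 (real n) * real (max k 2) powr (1 * log 2 (real (max k 2)))"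
      using bound_U_real[OF kn] .
    note RA = real_arith[OF Qr _ _ _ t l1 ub]
    show "real (length qs) \<le> 8 * (real n ^ 2 * real (U n k)
                  + real (net_edges n N) * real n * log 2 (real n)) \<and>
           real (length qs) \<le> 8 * (real n ^ 2 * 2 ^ k * log 2 (real n)
                  * real (max k 2) powr (1 * log 2 (real (max k 2)))
                  + real (net_edges n N) * real n * log 2 (real n))"
      using RA by simp
  qed
qed

theorem corollary3:
  shows "(\<exists>A. learns_with_bounds limited_oracle (\<lambda>n k. n - 2 - 2 * k) A) \<and>
         (\<exists>A. learns_with_bounds malicious_oracle (\<lambda>n k. (n - 1) div 2 - k - 1) A)"
proof (intro conjI exI)
  show "learns_with_bounds limited_oracle (\<lambda>n k. n - 2 - 2 * k) learnerA"
    by (rule learns_generic) (rule good_limited; simp)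
  show "learns_with_bounds malicious_oracle (\<lambda>n k. (n - 1) div 2 - k - 1) learnerA"
    by (rule learns_generic) (rule good_malicious; simp)
qed


end
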